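(* Let $k$ be a non-archimedean local field of residue characteristic $2$ and let $B(x)=\sum_{i=1}^n a_i x_i^2$ be an anisotropic diagonal quadratic form on $k^n$ with $0\le\operatorname{ord} a_i\le 1$ for all $i$. Let $a=q^{-\alpha}$, $z=q^{-\beta}$ and $u=q^{-2\beta-n}=z^2q^{-n}$. Then (for $\operatorname{Re}\alpha,\operatorname{Re}\beta$ large enough that all series converge) \[ \Pi^B(\alpha,\beta) = \sum_{0\le T<e} a^T X^B(\beta;\varpi^{2T}) + \frac{|2|^\alpha}{1-au}\, X^B(\beta;4) + \frac{|2|^\alpha (a-au)}{(1-a)(1-au)}\, X^B(\beta;0). \]
   Context: $k$ has ring of integers $\mathfrak o$, uniformizer $\varpi$, residue field of cardinality $q$, absolute value normalized by $|\varpi|=q^{-1}$, normalized valuation $\operatorname{ord}$, and $e=\operatorname{ord}(2)$ is the ramification index. On $\mathfrak o^n$ use the additive Haar measure of total mass $1$. For $\rho\in\mathfrak o$ and integer $\ell\ge0$ set $X_\ell^B(\rho)=\operatorname{meas}\{x\in\mathfrak o^n: B(x)-\rho\in 2\varpi^\ell\mathfrak o\}$ and, with $z=q^{-\beta}$, $X^B(\beta;\rho)=\sum_{\ell\ge0} z^\ell X^B_\ell(\rho)$. Define $\Pi^B(\alpha,\beta)=\int_{k^\times\cap\mathfrak o}|t|^\alpha X^B(\beta;t^2)\,dt$, where $dt$ is the multiplicative Haar measure on $k^\times$ normalized so that $\mathfrak o^\times$ has volume $1$. *)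

theory Defs
  imports "HOL-Analysis.Analysis"
begin

text \<open>A field k with a normalized discrete valuation v (= ord, the value at 0 is
irrelevant and never used), a uniformizer, residue field of cardinality q.\<close>

definition valring :: "('a::field \<Rightarrow> int) \<Rightarrow> 'a set" where
  "valring v = {x. x = 0 \<or> 0 \<le> v x}"

definition residue_rel :: "('a::field \<Rightarrow> int) \<Rightarrow> ('a \<times> 'a) set" where
  "residue_rel v = {(x, y). x \<in> valring v \<and> y \<in> valring v \<and> (x = y \<or> 1 \<le> v (x - y))}"

text \<open>Non-archimedean local field of residue characteristic 2 and characteristic 0
(so that e = ord 2 is finite): discretely valued, complete, finite residue field
of cardinality q, with 2 in the maximal ideal.\<close>

definition nonarch_local_field_res2 :: "('a::field \<Rightarrow> int) \<Rightarrow> 'a \<Rightarrow> nat \<Rightarrow> bool" where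
  "nonarch_local_field_res2 v \<pi> q \<longleftrightarrow>
     (\<forall>x y. x \<noteq> 0 \<longrightarrow> y \<noteq> 0 \<longrightarrow> v (x * y) = v x + v y) \<and>
     (\<forall>x y. x \<noteq> 0 \<longrightarrow> y \<noteq> 0 \<longrightarrow> x + y \<noteq> 0 \<longrightarrow> min (v x) (v y) \<le> v (x + y)) \<and>
     \<pi> \<noteq> 0 \<and> v \<pi> = 1 \<and>
     finite (valring v // residue_rel v) \<and> card (valring v // residue_rel v) = q \<and>
     (\<forall>s::nat \<Rightarrow> 'a. (\<forall>m::nat. \<exists>K. \<forall>i\<ge>K. \<forall>j\<ge>K. s i = s j \<or> int m \<le> v (s i - s j))
        \<longrightarrow> (\<exists>L. \<forall>m::nat. \<exists>K. \<forall>i\<ge>K. s i = L \<or> int m \<le> v (s i - L))) \<and>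
     (2::'a) \<noteq> 0 \<and> 1 \<le> v 2"

definition absv :: "('a::field \<Rightarrow> int) \<Rightarrow> nat \<Rightarrow> 'a \<Rightarrow> real" where
  "absv v q x = (if x = 0 then 0 else real q powr (- real_of_int (v x)))"

definition intvecs :: "('a::field \<Rightarrow> int) \<Rightarrow> ('a ^ 'n) set" where
  "intvecs v = {x. \<forall>i. x $ i \<in> valring v}"

text \<open>Cosets c + (pi^m o)^n inside o^n; they generate the Borel sigma-algebra of o^n.\<close>
definition add_cosets :: "('a::field \<Rightarrow> int) \<Rightarrow> 'a \<Rightarrow> ('a ^ 'n) set set" where
  "add_cosets v \<pi> = {{x \<in> intvecs v. \<forall>i. \<exists>w\<in>valring v. x $ i - c $ i = \<pi> ^ m * w} | c m.
       c \<in> intvecs v}"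

definition is_additive_haar_prob :: "('a::field \<Rightarrow> int) \<Rightarrow> 'a \<Rightarrow> ('a ^ 'n) measure \<Rightarrow> bool" where
  "is_additive_haar_prob v \<pi> M \<longleftrightarrow>
     space M = intvecs v \<and> sets M = sigma_sets (intvecs v) (add_cosets v \<pi>) \<and>
     (\<forall>A\<in>sets M. \<forall>c\<in>intvecs v. emeasure M ((\<lambda>x. x + c) ` A) = emeasure M A) \<and>
     emeasure M (space M) = 1"

definition unit_filtr :: "('a::field \<Rightarrow> int) \<Rightarrow> 'a \<Rightarrow> nat \<Rightarrow> 'a set" where
  "unit_filtr v \<pi> m = {x. x \<noteq> 0 \<and> v x = 0 \<and> (m = 0 \<or> (\<exists>w\<in>valring v. x - 1 = \<pi> ^ m * w))}"

definition mult_cosets :: "('a::field \<Rightarrow> int) \<Rightarrow> 'a \<Rightarrow> 'a set set" where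
  "mult_cosets v \<pi> = {(\<lambda>u. c * u) ` unit_filtr v \<pi> m | c m. c \<noteq> 0}"

definition is_mult_haar :: "('a::field \<Rightarrow> int) \<Rightarrow> 'a \<Rightarrow> 'a measure \<Rightarrow> bool" where
  "is_mult_haar v \<pi> N \<longleftrightarrow>
     space N = {x. x \<noteq> 0} \<and> sets N = sigma_sets {x. x \<noteq> 0} (mult_cosets v \<pi>) \<and>
     (\<forall>A\<in>sets N. \<forall>c. c \<noteq> 0 \<longrightarrow> emeasure N ((\<lambda>u. c * u) ` A) = emeasure N A) \<and>
     emeasure N (unit_filtr v \<pi> 0) = 1"

definition diagQ :: "'a::field ^ 'n \<Rightarrow> 'a ^ 'n \<Rightarrow> 'a" where
  "diagQ a x = (\<Sum>i\<in>UNIV. a $ i * (x $ i) ^ 2)"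

definition XBl :: "('a::field \<Rightarrow> int) \<Rightarrow> 'a \<Rightarrow> ('a ^ 'n) measure \<Rightarrow> 'a ^ 'n \<Rightarrow> nat \<Rightarrow> 'a \<Rightarrow> real" where
  "XBl v \<pi> M a l \<rho> = measure M {x \<in> intvecs v. \<exists>w\<in>valring v. diagQ a x - \<rho> = 2 * \<pi> ^ l * w}"

definition XB :: "('a::field \<Rightarrow> int) \<Rightarrow> 'a \<Rightarrow> nat \<Rightarrow> ('a ^ 'n) measure \<Rightarrow> 'a ^ 'n \<Rightarrow> complex \<Rightarrow> 'a \<Rightarrow> complex" where
  "XB v \<pi> q M a \<beta> \<rho> = (\<Sum>l. (of_nat q powr (- \<beta>)) ^ l * complex_of_real (XBl v \<pi> M a l \<rho>))"

definition PiB_integrand :: "('a::field \<Rightarrow> int) \<Rightarrow> 'a \<Rightarrow> nat \<Rightarrow> ('a ^ 'n) measure \<Rightarrow> 'a ^ 'n \<Rightarrow> complex \<Rightarrow> complex \<Rightarrow> 'a \<Rightarrow> complex" where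
  "PiB_integrand v \<pi> q M a \<alpha> \<beta> t = complex_of_real (absv v q t) powr \<alpha> * XB v \<pi> q M a \<beta> (t ^ 2)"

definition PiB :: "('a::field \<Rightarrow> int) \<Rightarrow> 'a \<Rightarrow> nat \<Rightarrow> ('a ^ 'n) measure \<Rightarrow> 'a measure \<Rightarrow> 'a ^ 'n \<Rightarrow> complex \<Rightarrow> complex \<Rightarrow> complex" where
  "PiB v \<pi> q M N a \<alpha> \<beta> = set_lebesgue_integral N (valring v - {0}) (PiB_integrand v \<pi> q M a \<alpha> \<beta>)"

end

theory Submission
  imports Defs
begin


locale vf =
  fixes v :: "'a::field \<Rightarrow> int" and \<pi> :: 'a and q :: nat
  assumes F: "nonarch_local_field_res2 v \<pi> q"
begin

lemma Fs: "(\<forall>x y. x \<noteq> 0 \<longrightarrow> y \<noteq> 0 \<longrightarrow> v (x * y) = v x + v y) \<and>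
  (\<forall>x y. x \<noteq> 0 \<longrightarrow> y \<noteq> 0 \<longrightarrow> x + y \<noteq> 0 \<longrightarrow> min (v x) (v y) \<le> v (x + y)) \<and>
  \<pi> \<noteq> 0 \<and> v \<pi> = 1 \<and> finite (valring v // residue_rel v) \<and> card (valring v // residue_rel v) = q \<and>
  (\<forall>s::nat \<Rightarrow> 'a. (\<forall>m::nat. \<exists>K. \<forall>i\<ge>K. \<forall>j\<ge>K. s i = s j \<or> int m \<le> v (s i - s j))
        \<longrightarrow> (\<exists>L. \<forall>m::nat. \<exists>K. \<forall>i\<ge>K. s i = L \<or> int m \<le> v (s i - L))) \<and>
  (2::'a) \<noteq> 0 \<and> 1 \<le> v 2"
  using F unfolding nonarch_local_field_res2_def .

lemma vmult: "x \<noteq> 0 \<Longrightarrow> y \<noteq> 0 \<Longrightarrow> v (x * y) = v x + v y"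
  using Fs[THEN conjunct1] by blast
lemma ultra: "x \<noteq> 0 \<Longrightarrow> y \<noteq> 0 \<Longrightarrow> x + y \<noteq> 0 \<Longrightarrow> min (v x) (v y) \<le> v (x + y)"
  using Fs[THEN conjunct2, THEN conjunct1] by blast
lemma pi_nz: "\<pi> \<noteq> 0" using Fs by simp
lemma vpi: "v \<pi> = 1" using Fs by simp
lemma two_nz: "(2::'a) \<noteq> 0" using Fs by simp
lemma v2: "1 \<le> v 2" using Fs by simp
lemma resfin: "finite (valring v // residue_rel v)" using Fs by simp
lemma rescard: "card (valring v // residue_rel v) = q" using Fs by simp
lemma complete: fixes s :: "nat \<Rightarrow> 'a"
  assumes "\<forall>m::nat. \<exists>K. \<forall>i\<ge>K. \<forall>j\<ge>K. s i = s j \<or> int m \<le> v (s i - s j)"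
  shows "\<exists>L. \<forall>m::nat. \<exists>K. \<forall>i\<ge>K. s i = L \<or> int m \<le> v (s i - L)"
  using Fs[THEN conjunct2, THEN conjunct2, THEN conjunct2, THEN conjunct2, THEN conjunct2, THEN conjunct2, THEN conjunct1, THEN spec[of _ s], THEN mp, OF assms] .

lemma v1: "v 1 = 0" using vmult[of 1 1] by simp
lemma vm1: "v (-1) = 0" using vmult[of "-1" "-1"] v1 by simp
lemma vminus: "v (- x) = v x"
proof (cases "x = 0")
  case False then show ?thesis using vmult[of "-1" x] vm1 by simp
qed simp
lemma vinv: "x \<noteq> 0 \<Longrightarrow> v (inverse x) = - v x"
  using vmult[of x "inverse x"] v1 by simp
lemma vdiv: "x \<noteq> 0 \<Longrightarrow> y \<noteq> 0 \<Longrightarrow> v (x / y) = v x - v y"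
  by (simp add: divide_inverse vmult vinv)
lemma vpow: "x \<noteq> 0 \<Longrightarrow> v (x ^ k) = int k * v x"
  by (induction k) (auto simp: v1 vmult algebra_simps)
lemma vpipow: "v (\<pi> ^ k) = int k" using vpow[OF pi_nz] vpi by simp

definition dv :: "int \<Rightarrow> 'a \<Rightarrow> bool" where "dv m x \<longleftrightarrow> x = 0 \<or> m \<le> v x"

lemma dv0[simp]: "dv m 0" by (simp add: dv_def)
lemma dv_mono: "dv m x \<Longrightarrow> k \<le> m \<Longrightarrow> dv k x" by (auto simp: dv_def)
lemma dv_minus: "dv m (-x) = dv m x" by (auto simp: dv_def vminus)
lemma dv_add: "dv m x \<Longrightarrow> dv m y \<Longrightarrow> dv m (x + y)"
  unfolding dv_def using ultra[of x y] by fastforce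
lemma dv_diff: "dv m x \<Longrightarrow> dv m y \<Longrightarrow> dv m (x - y)"
  using dv_add[of m x "-y"] by (simp add: dv_minus)
lemma dv_mult: "dv m x \<Longrightarrow> dv k y \<Longrightarrow> dv (m + k) (x * y)"
  unfolding dv_def by (cases "x = 0"; cases "y = 0") (auto simp: vmult)
lemma dv_mult_r: "dv m x \<Longrightarrow> dv 0 y \<Longrightarrow> dv m (x * y)"
  using dv_mult[of m x 0 y] by simp
lemma dv_mult_l: "dv 0 x \<Longrightarrow> dv m y \<Longrightarrow> dv m (x * y)"
  using dv_mult[of 0 x m y] by simp
lemma dv_sum: "(\<And>i. i \<in> S \<Longrightarrow> dv m (f i)) \<Longrightarrow> dv m (sum f S)"
  by (induction S rule: infinite_finite_induct) (simp_all add: dv_add)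
lemma dv_1: "dv 0 1" by (simp add: dv_def v1)
lemma dv_pow: "dv 0 x \<Longrightarrow> dv 0 (x ^ k)"
  by (induction k) (simp_all add: dv_1 dv_mult_l)
lemma dv_pipow: "dv (int k) (\<pi> ^ k)" by (simp add: dv_def vpipow)
lemma dv_2: "dv 1 2" using v2 by (simp add: dv_def)
lemma dv_num: "dv 0 (numeral n)"
proof (induction n)
  case One then show ?case by (simp add: dv_1)
next
  case (Bit0 n) then show ?case using dv_add[of 0 "numeral n" "numeral n"] by (simp add: numeral_Bit0)
next
  case (Bit1 n) then show ?case using dv_add[OF dv_add[of 0 "numeral n" "numeral n"] dv_1]
    by (simp add: numeral_Bit1)
qed
lemma valring_dv: "x \<in> valring v \<longleftrightarrow> dv 0 x" by (simp add: valring_def dv_def)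

lemma dv_iff: "(\<exists>w\<in>valring v. x = \<pi> ^ k * w) \<longleftrightarrow> dv (int k) x"
proof
  assume "\<exists>w\<in>valring v. x = \<pi> ^ k * w"
  then obtain w where "dv 0 w" "x = \<pi> ^ k * w" by (auto simp: valring_dv)
  then show "dv (int k) x" using dv_mult[OF dv_pipow, of 0 w] by simp
next
  assume d: "dv (int k) x"
  show "\<exists>w\<in>valring v. x = \<pi> ^ k * w"
  proof
    show "x = \<pi> ^ k * (x / \<pi> ^ k)" using pi_nz by simp
    show "x / \<pi> ^ k \<in> valring v" unfolding valring_dv using d pi_nz by (cases "x = 0") (auto simp: dv_def vdiv vpipow)
  qed
qed

lemma dv_all: "(\<And>m::nat. dv (int m) x) \<Longrightarrow> x = 0"
proof (rule ccontr)
  assume "\<And>m::nat. dv (int m) x" "x \<noteq> 0"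
  then have "int (nat (v x + 1)) \<le> v x" unfolding dv_def by blast
  then show False by (auto split: if_splits)
qed

lemma dv_unit_mult: "v u = 0 \<Longrightarrow> u \<noteq> 0 \<Longrightarrow> dv m (u * x) = dv m x"
  by (cases "x = 0") (auto simp: dv_def vmult)

lemma dv_pi_mult: "dv m (\<pi> ^ k * x) = dv (m - int k) x"
  by (cases "x = 0") (auto simp: dv_def vmult vpipow pi_nz)

end


primrec hseq :: "'a::field \<Rightarrow> nat \<Rightarrow> 'a" where
  "hseq c 0 = 0" | "hseq c (Suc k) = c - (hseq c k)^2"

context vf begin

lemma hseq_dv1: "dv 1 c \<Longrightarrow> dv 1 (hseq c k)"
proof (induction k)
  case (Suc k)
  then have "dv 2 ((hseq c k)^2)" using dv_mult[of 1 "hseq c k" 1 "hseq c k"] by (simp add: power2_eq_square)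
  then have "dv 1 ((hseq c k)^2)" using dv_mono by fastforce
  then show ?case using Suc by (simp add: dv_diff)
qed simp

lemma hseq_step: "dv 1 c \<Longrightarrow> dv (int k) (hseq c (Suc k) - hseq c k)"
proof (induction k)
  case 0 then show ?case using dv_mono by fastforce
next
  case (Suc k)
  have e: "hseq c (Suc (Suc k)) - hseq c (Suc k) = - ((hseq c (Suc k) - hseq c k) * (hseq c (Suc k) + hseq c k))"
    by (simp add: power2_eq_square algebra_simps)
  have "dv 1 (hseq c (Suc k) + hseq c k)" using hseq_dv1[OF Suc.prems] dv_add by blast
  then have "dv (int k + 1) ((hseq c (Suc k) - hseq c k) * (hseq c (Suc k) + hseq c k))"
    using dv_mult Suc by blast
  then show ?case unfolding e dv_minus by (simp add: add.commute)
qed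

lemma hseq_cauchy: "dv 1 c \<Longrightarrow> i \<le> j \<Longrightarrow> dv (int i) (hseq c j - hseq c i)"
proof (induction j)
  case 0 then show ?case by simp
next
  case (Suc j)
  show ?case
  proof (cases "i = Suc j")
    case False
    then have "i \<le> j" using Suc by simp
    have e: "hseq c (Suc j) - hseq c i = (hseq c (Suc j) - hseq c j) + (hseq c j - hseq c i)" by simp
    have a: "dv (int i) (hseq c (Suc j) - hseq c j)" using hseq_step[OF Suc.prems(1), of j] \<open>i \<le> j\<close> dv_mono by simp
    have b: "dv (int i) (hseq c j - hseq c i)" using Suc \<open>i \<le> j\<close> by simp
    show ?thesis unfolding e by (rule dv_add[OF a b])
  qed simp
qed

lemma hensel_aux: assumes c: "dv 1 c" shows "\<exists>L. dv 0 L \<and> L^2 + L = c"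
proof -
  let ?y = "hseq c"
  have "\<forall>m::nat. \<exists>K. \<forall>i\<ge>K. \<forall>j\<ge>K. ?y i = ?y j \<or> int m \<le> v (?y i - ?y j)"
  proof
    fix m :: nat
    show "\<exists>K. \<forall>i\<ge>K. \<forall>j\<ge>K. ?y i = ?y j \<or> int m \<le> v (?y i - ?y j)"
    proof (intro exI allI impI)
      fix i j assume "m \<le> i" "m \<le> j"
      have "dv (int m) (?y i - ?y j)"
      proof (cases "i \<le> j")
        case True
        then have "dv (int i) (?y j - ?y i)" using hseq_cauchy c by blast
        then have "dv (int i) (?y i - ?y j)" using dv_minus[of _ "?y i - ?y j"] by simp
        then show ?thesis using \<open>m \<le> i\<close> dv_mono[of "int i" _ "int m"] by simp
      next
        case False
        then have "dv (int j) (?y i - ?y j)" using hseq_cauchy c by simp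
        then show ?thesis using \<open>m \<le> j\<close> dv_mono[of "int j" _ "int m"] by simp
      qed
      then show "?y i = ?y j \<or> int m \<le> v (?y i - ?y j)" by (simp add: dv_def)
    qed
  qed
  from complete[OF this] obtain L where L: "\<forall>m::nat. \<exists>K. \<forall>i\<ge>K. ?y i = L \<or> int m \<le> v (?y i - L)" by blast
  have Ld: "\<forall>m::nat. \<exists>K. \<forall>i\<ge>K. dv (int m) (L - ?y i)"
  proof
    fix m :: nat
    obtain K where "\<forall>i\<ge>K. ?y i = L \<or> int m \<le> v (?y i - L)" using L by blast
    then have "\<forall>i\<ge>K. dv (int m) (?y i - L)" by (simp add: dv_def)
    then have "\<forall>i\<ge>K. dv (int m) (L - ?y i)" using dv_minus[of "int m" "?y _ - L"] by simp
    then show "\<exists>K. \<forall>i\<ge>K. dv (int m) (L - ?y i)" by blast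
  qed
  obtain K0 where K0: "\<forall>i\<ge>K0. dv 0 (L - ?y i)" using Ld[rule_format, of 0] by auto
  have "dv 0 L"
  proof -
    have "L = (L - ?y K0) + ?y K0" by simp
    moreover have "dv 0 (?y K0)" using hseq_dv1[OF c, of K0] dv_mono[of 1 _ 0] by simp
    ultimately show ?thesis using dv_add[OF K0[rule_format, OF order_refl]] by metis
  qed
  moreover have "L^2 + L - c = 0"
  proof (rule dv_all)
    fix m :: nat
    obtain K where K: "\<forall>i\<ge>K. dv (int m) (L - ?y i)" using Ld by blast
    have e: "L^2 + L - c = (L - ?y K) * (L + ?y K) + (L - ?y (Suc K))"
      by (simp add: power2_eq_square algebra_simps)
    have "dv 0 (?y K)" using hseq_dv1[OF c, of K] dv_mono[of 1 _ 0] by simp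
    then have "dv 0 (L + ?y K)" using \<open>dv 0 L\<close> dv_add by blast
    then have "dv (int m) ((L - ?y K) * (L + ?y K))" using K dv_mult_r by blast
    moreover have "dv (int m) (L - ?y (Suc K))" using K[rule_format, of "Suc K"] by (simp del: hseq.simps)
    ultimately show "dv (int m) (L^2 + L - c)" unfolding e using dv_add by blast
  qed
  ultimately show ?thesis by (intro exI[of _ L]) simp
qed

lemma hensel: assumes c: "dv 1 c" shows "\<exists>s. s^2 = 1 + 4 * c"
proof -
  obtain L where "L^2 + L = c" using hensel_aux[OF c] by blast
  then have "(1 + 2 * L)^2 = 1 + 4 * c" by (auto simp: power2_eq_square algebra_simps)
  then show ?thesis by blast
qed

end


context vf begin

lemma v4: "v 4 = 2 * v 2"
  proof -
  have "(4::'a) = 2 * 2" by simp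
  then show ?thesis using vmult[OF two_nz two_nz] by simp
qed

lemma four_nz: "(4::'a) \<noteq> 0"
proof -
  have "(4::'a) = 2 * 2" by simp
  then show ?thesis using two_nz by (metis mult_eq_0_iff)
qed

lemma aniso_key:
  fixes a x :: "'a ^ 'n"
  assumes aniso: "\<forall>x. diagQ a x = 0 \<longrightarrow> x = 0"
    and ord_a: "\<forall>i. 0 \<le> v (a $ i) \<and> v (a $ i) \<le> 1"
    and xi: "dv 0 (x $ i)" "\<not> dv 1 (x $ i)"
  shows "\<not> dv (2 * v 2 + 2) (diagQ a x)"
proof
  assume B: "dv (2 * v 2 + 2) (diagQ a x)"
  let ?B = "diagQ a x"
  have xnz: "x $ i \<noteq> 0" and vx: "v (x $ i) = 0" using xi by (auto simp: dv_def)
  have anz: "a $ i \<noteq> 0"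
  proof
    assume "a $ i = 0"
    have "diagQ a (axis i 1) = (\<Sum>j\<in>UNIV. if j = i then a $ i else 0)"
      unfolding diagQ_def by (intro sum.cong) (auto simp: axis_def)
    also have "\<dots> = 0" using \<open>a $ i = 0\<close> by simp
    finally have "axis i (1::'a) = 0" using aniso by blast
    then show False by (metis axis_nth zero_index zero_neq_one)
  qed
  let ?d = "a $ i * (x $ i)^2"
  have dnz: "?d \<noteq> 0" using anz xnz by simp
  have vd: "v ?d = v (a $ i)" using vmult[OF anz] vmult[OF xnz xnz] xnz vx
    by (simp add: power2_eq_square)
  define c where "c = - ?B / (4 * ?d)"
  have c1: "dv 1 c"
  proof (cases "?B = 0")
    case True then show ?thesis by (simp add: c_def)
  next
    case False
    have "v c = v ?B - (2 * v 2 + v (a $ i))"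
      unfolding c_def using False dnz four_nz vd by (simp add: vdiv vminus vmult v4)
    moreover have "2 * v 2 + 2 \<le> v ?B" using B False by (simp add: dv_def)
    ultimately have "1 \<le> v c" using ord_a[rule_format, of i] by linarith
    then show ?thesis by (simp add: dv_def)
  qed
  obtain s where s: "s^2 = 1 + 4 * c" using hensel[OF c1] by blast
  have s2: "s^2 = 1 - ?B / ?d" using s four_nz by (simp add: c_def)
  define y where "y = (\<chi> j. if j = i then x $ i * s else x $ j)"
  have "diagQ a y = (\<Sum>j\<in>UNIV. a $ j * (x $ j)^2 + (if j = i then ?d * (s^2 - 1) else 0))"
    unfolding diagQ_def y_def by (intro sum.cong) (auto simp: algebra_simps power2_eq_square)
  also have "\<dots> = ?B + ?d * (s^2 - 1)" by (simp add: sum.distrib diagQ_def)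
  also have "\<dots> = 0"
  proof -
    have "?d * (s^2 - 1) = ?d * (- (?B / ?d))" using s2 by simp
    also have "\<dots> = - ?B" using dnz by simp
    finally show ?thesis by simp
  qed
  finally have "y = 0" using aniso by blast
  moreover have "y $ i = x $ i * s" unfolding y_def by simp
  ultimately have "x $ i * s = 0" by simp
  then have "s = 0" using xnz by simp
  then have "?B = ?d" using s2 dnz by (simp add: field_simps)
  then have "2 * v 2 + 2 \<le> v (a $ i)" using B dnz vd by (auto simp: dv_def)
  then show False using ord_a[rule_format, of i] v2 by linarith
qed

end


definition sc :: "'a::field \<Rightarrow> 'a ^ 'n \<Rightarrow> 'a ^ 'n" where "sc u x = (\<chi> i. u * x $ i)"
lemma sc_nth[simp]: "sc u x $ i = u * x $ i" by (simp add: sc_def)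

context vf begin

definition cos :: "'a ^ 'n \<Rightarrow> nat \<Rightarrow> ('a ^ 'n) set" where
  "cos c m = {x \<in> intvecs v. \<forall>i. dv (int m) (x $ i - c $ i)}"

lemma intvecs_dv: "x \<in> intvecs v \<longleftrightarrow> (\<forall>i. dv 0 (x $ i))"
  by (simp add: intvecs_def valring_dv)

lemma add_cosets_eq: "add_cosets v \<pi> = {cos c m | c m. c \<in> intvecs v}"
  unfolding add_cosets_def cos_def dv_iff ..

lemma cos_subset: "cos c m \<subseteq> intvecs v" by (auto simp: cos_def)

lemma cos_mem: "x \<in> cos c m \<longleftrightarrow> x \<in> intvecs v \<and> (\<forall>i. dv (int m) (x $ i - c $ i))"
  by (simp add: cos_def)

lemma cos0: "c \<in> intvecs v \<Longrightarrow> cos c 0 = intvecs v"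
  by (auto simp: cos_def intvecs_dv intro: dv_diff)

lemma c_in_cos: "c \<in> intvecs v \<Longrightarrow> c \<in> cos c m" by (simp add: cos_def)

lemma cos_eq: assumes "x \<in> cos c m" shows "cos x m = cos c m"
proof -
  have d: "\<And>i. dv (int m) (x $ i - c $ i)" using assms by (simp add: cos_def)
  have "\<And>y i. dv (int m) (y $ i - x $ i) \<longleftrightarrow> dv (int m) (y $ i - c $ i)"
  proof -
    fix y i
    have e1: "y $ i - c $ i = (y $ i - x $ i) + (x $ i - c $ i)" by simp
    have e2: "y $ i - x $ i = (y $ i - c $ i) - (x $ i - c $ i)" by simp
    show "dv (int m) (y $ i - x $ i) \<longleftrightarrow> dv (int m) (y $ i - c $ i)"
      using dv_add[OF _ d[of i], of "y $ i - x $ i"] dv_diff[OF _ d[of i], of "y $ i - c $ i"]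
      by (metis e1 e2)
  qed
  then show ?thesis by (simp add: cos_def)
qed

lemma cos_mono: "k \<le> m \<Longrightarrow> cos c m \<subseteq> cos c k"
  by (auto simp: cos_def intro: dv_mono)

lemma cos_translate:
  assumes "c \<in> intvecs v" "d \<in> intvecs v"
  shows "(\<lambda>x. x + (d - c)) ` cos c m = cos d m"
proof
  show "(\<lambda>x. x + (d - c)) ` cos c m \<subseteq> cos d m"
  proof
    fix y assume "y \<in> (\<lambda>x. x + (d - c)) ` cos c m"
    then obtain x where x: "x \<in> cos c m" "y = x + (d - c)" by blast
    have "\<And>i. dv 0 (y $ i)" using x assms dv_add dv_diff
      unfolding cos_def intvecs_dv by simp
    moreover have "\<And>i. y $ i - d $ i = x $ i - c $ i" using x by simp
    ultimately show "y \<in> cos d m" using x(1) by (simp add: cos_def intvecs_dv)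
  qed
next
  show "cos d m \<subseteq> (\<lambda>x. x + (d - c)) ` cos c m"
  proof
    fix y assume y: "y \<in> cos d m"
    let ?x = "y - (d - c)"
    have "\<And>i. dv 0 (?x $ i)" using y assms dv_add dv_diff
      unfolding cos_def intvecs_dv by simp
    moreover have "\<And>i. ?x $ i - c $ i = y $ i - d $ i" by simp
    ultimately have "?x \<in> cos c m" using y by (simp add: cos_def intvecs_dv)
    then show "y \<in> (\<lambda>x. x + (d - c)) ` cos c m" by (intro image_eqI[of _ _ ?x]) simp_all
  qed
qed

lemma cos_inter: "cos c m \<inter> cos d k = {} \<or> cos c m \<inter> cos d k = cos c m \<or> cos c m \<inter> cos d k = cos d k"
proof (cases "cos c m \<inter> cos d k = {}")
  case False
  then obtain x where x: "x \<in> cos c m" "x \<in> cos d k" by blast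
  have "cos c m = cos x m" "cos d k = cos x k" using cos_eq x by auto
  then show ?thesis using cos_mono[of m k x] cos_mono[of k m x] by (cases "m \<le> k") auto
qed simp

lemma sc_intvecs: "dv 0 u \<Longrightarrow> x \<in> intvecs v \<Longrightarrow> sc u x \<in> intvecs v"
  by (simp add: intvecs_dv dv_mult_l)

end

locale vfM = vf v \<pi> q for v :: "'a::field \<Rightarrow> int" and \<pi> q +
  fixes M :: "('a ^ 'n) measure"
  assumes haar: "is_additive_haar_prob v \<pi> M"
begin

lemma spaceM: "space M = intvecs v" and setsM: "sets M = sigma_sets (intvecs v) (add_cosets v \<pi>)"
  and transl: "\<And>A c. A \<in> sets M \<Longrightarrow> c \<in> intvecs v \<Longrightarrow> emeasure M ((\<lambda>x. x + c) ` A) = emeasure M A"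
  and M1: "emeasure M (space M) = 1"
  using haar unfolding is_additive_haar_prob_def by blast+

lemma finM: "finite_measure M" by (rule finite_measureI) (simp add: M1)

lemma finite_emeasure: "emeasure M A \<noteq> \<infinity>"
  using finite_measure.emeasure_finite[OF finM] by simp

lemma cos_sets: "c \<in> intvecs v \<Longrightarrow> cos c m \<in> sets M"
  unfolding setsM add_cosets_eq by (rule sigma_sets.Basic) blast

lemma gen_sub: "add_cosets v \<pi> \<subseteq> Pow (intvecs v)"
  unfolding add_cosets_eq using cos_subset by blast

lemma sets_alt: "sets M = sigma_sets (intvecs v) (insert {} (add_cosets v \<pi>))"
  unfolding setsM
  by (rule sigma_sets_eqI) (auto intro: sigma_sets.Basic sigma_sets.Empty)

lemma int_stable: "Int_stable (insert {} (add_cosets v \<pi> :: ('a^'n) set set))"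
  unfolding Int_stable_def add_cosets_eq
proof (intro ballI)
  fix a b :: "('a^'n) set" assume "a \<in> insert {} {cos c m |c m. c \<in> intvecs v}" "b \<in> insert {} {cos c m |c m. c \<in> intvecs v}"
  then show "a \<inter> b \<in> insert {} {cos c m |c m. c \<in> intvecs v}"
  proof (elim insertE)
    assume "a \<in> {cos c m |c m. c \<in> intvecs v}" "b \<in> {cos c m |c m. c \<in> intvecs v}"
    then obtain c m d k where "a = cos c m" "b = cos d k" "c \<in> intvecs v" "d \<in> intvecs v" by blast
    then show ?thesis using cos_inter[of c m d k] by blast
  qed auto
qed

lemma measure_cos_indep:
  assumes "c \<in> intvecs v" "d \<in> intvecs v"
  shows "measure M (cos c m) = measure M (cos d m)"
proof -
  have "emeasure M (cos d m) = emeasure M ((\<lambda>x. x + (d - c)) ` cos c m)"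
    using cos_translate[OF assms] by simp
  also have "\<dots> = emeasure M (cos c m)"
    using transl[OF cos_sets[OF assms(1)]] assms by (simp add: intvecs_dv dv_diff)
  finally show ?thesis by (simp add: measure_def)
qed

lemma measure_eq_gen:
  assumes sN: "sets K = sets M"
    and eq: "\<And>c m. c \<in> intvecs v \<Longrightarrow> emeasure K (cos c m) = emeasure M (cos c m)"
  shows "K = M"
proof (rule measure_eqI_generator_eq[OF int_stable, of "intvecs v" K M "\<lambda>_. (intvecs v :: ('a^'n) set)"])
  show "insert {} (add_cosets v \<pi>) \<subseteq> Pow (intvecs v)" using gen_sub by blast
  show "\<And>X. X \<in> insert {} (add_cosets v \<pi>) \<Longrightarrow> emeasure K X = emeasure M X"
    unfolding add_cosets_eq using eq by auto
  show "sets K = sigma_sets (intvecs v) (insert {} (add_cosets v \<pi>))" using sN sets_alt by simp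
  show "sets M = sigma_sets (intvecs v) (insert {} (add_cosets v \<pi>))" using sets_alt by simp
  have z: "(0::'a^'n) \<in> intvecs v" by (simp add: intvecs_dv)
  then have "intvecs v = cos (0::'a^'n) 0" by (rule cos0[symmetric])
  then have "(intvecs v :: ('a^'n) set) \<in> add_cosets v \<pi>" unfolding add_cosets_eq using z by blast
  then show "range (\<lambda>_. intvecs v) \<subseteq> insert {} (add_cosets v \<pi> :: ('a^'n) set set)" by auto
  show "(\<Union>i. intvecs v) = intvecs v" by simp
  show "\<And>i. emeasure K (intvecs v) \<noteq> \<infinity>"
    using eq[OF z, of 0] cos0[OF z] finite_emeasure by simp
qed

end


context vf begin

lemma res_rel_eq: "residue_rel v = {(x, y). dv 0 x \<and> dv 0 y \<and> dv 1 (x - y)}"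
  unfolding residue_rel_def valring_dv by (auto simp: dv_def)

lemma equiv_res: "equiv (valring v) (residue_rel v)"
proof (rule equivI)
  show "residue_rel v \<subseteq> valring v \<times> valring v" by (auto simp: res_rel_eq valring_dv)
  show "refl_on (valring v) (residue_rel v)"
    unfolding refl_on_def res_rel_eq by (auto simp: valring_dv)
  show "sym (residue_rel v)"
    unfolding sym_def res_rel_eq
  proof clarsimp
    fix x y assume "dv 1 (x - y)"
    then show "dv 1 (y - x)" using dv_minus[of 1 "x - y"] by simp
  qed
  show "trans (residue_rel v)"
    unfolding trans_def res_rel_eq
  proof (clarsimp)
    fix x y z assume "dv 0 x" "dv 0 y" "dv 1 (x - y)" "dv 0 z" "dv 1 (y - z)"
    then show "dv 1 (x - z)" using dv_add[of 1 "x - y" "y - z"] by simp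
  qed
qed

definition Rep :: "'a set" where "Rep = (\<lambda>C. SOME x. x \<in> C) ` (valring v // residue_rel v)"

lemma some_in_class: "C \<in> valring v // residue_rel v \<Longrightarrow> (SOME x. x \<in> C) \<in> C"
  using in_quotient_imp_non_empty[OF equiv_res] by (simp add: some_in_eq)

lemma Rep_card: "finite Rep" "card Rep = q"
proof -
  have inj: "inj_on (\<lambda>C. SOME x. x \<in> C) (valring v // residue_rel v)"
  proof (rule inj_onI)
    fix C D assume C: "C \<in> valring v // residue_rel v" and D: "D \<in> valring v // residue_rel v"
      and e: "(SOME x. x \<in> C) = (SOME x. x \<in> D)"
    then have "C \<inter> D \<noteq> {}" using some_in_class[OF C] some_in_class[OF D] by auto
    then show "C = D" using quotient_disj[OF equiv_res C D] by blast
  qed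
  show "finite Rep" unfolding Rep_def using resfin by simp
  show "card Rep = q" unfolding Rep_def using card_image[OF inj] rescard by simp
qed

lemma Rep_dv0: "r \<in> Rep \<Longrightarrow> dv 0 r"
proof -
  assume "r \<in> Rep"
  then obtain C where C: "C \<in> valring v // residue_rel v" "r = (SOME x. x \<in> C)" unfolding Rep_def by blast
  then have "r \<in> C" using some_in_class by simp
  then show "dv 0 r" using in_quotient_imp_subset[OF equiv_res C(1)] valring_dv by blast
qed

lemma Rep_cover: "dv 0 x \<Longrightarrow> \<exists>r\<in>Rep. dv 1 (x - r)"
proof -
  assume x: "dv 0 x"
  let ?C = "residue_rel v `` {x}"
  have C: "?C \<in> valring v // residue_rel v" using x by (intro quotientI) (simp add: valring_dv)
  define r where "r = (SOME y. y \<in> ?C)"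
  have "r \<in> ?C" unfolding r_def using C by (rule some_in_class)
  then have "(x, r) \<in> residue_rel v" by simp
  then have "dv 1 (x - r)" unfolding res_rel_eq by simp
  moreover have "r \<in> Rep" unfolding Rep_def r_def using C by blast
  ultimately show ?thesis by blast
qed

lemma Rep_sep: assumes "r \<in> Rep" "r' \<in> Rep" "dv 1 (r - r')" shows "r = r'"
proof -
  obtain C where C: "C \<in> valring v // residue_rel v" "r = (SOME x. x \<in> C)" using assms(1) unfolding Rep_def by blast
  obtain D where D: "D \<in> valring v // residue_rel v" "r' = (SOME x. x \<in> D)" using assms(2) unfolding Rep_def by blast
  have "r \<in> C" "r' \<in> D" using C D some_in_class by auto
  moreover have "(r, r') \<in> residue_rel v" using assms Rep_dv0 by (simp add: res_rel_eq)
  ultimately have "C = D" using quotient_eq_iff[OF equiv_res C(1) D(1)] by blast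
  then show ?thesis using C D by simp
qed

lemma q_ge2: "2 \<le> q"
proof -
  have "dv 0 (0::'a)" "dv 0 (1::'a)" using dv_1 by auto
  obtain r0 where r0: "r0 \<in> Rep" "dv 1 (0 - r0)" using Rep_cover[of 0] by auto
  obtain r1 where r1: "r1 \<in> Rep" "dv 1 (1 - r1)" using Rep_cover[of 1] dv_1 by auto
  note r = r0 r1
  have "r0 \<noteq> r1"
  proof
    assume "r0 = r1"
    have "dv 1 ((1 - r1) - (0 - r0))" using r dv_diff by blast
    then have "dv 1 (1::'a)" using \<open>r0 = r1\<close> by simp
    then show False by (simp add: dv_def v1)
  qed
  then have "card {r0, r1} = 2" by simp
  moreover have "card {r0, r1} \<le> card Rep" using r Rep_card by (intro card_mono) auto
  ultimately show ?thesis using Rep_card by simp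
qed

definition Repn :: "('a ^ 'n) set" where "Repn = {r. \<forall>i. r $ i \<in> Rep}"

lemma Repn_card: "finite (Repn :: ('a ^ 'n) set)" "card (Repn :: ('a ^ 'n) set) = q ^ CARD('n)"
proof -
  have bij: "bij_betw vec_nth (Repn :: ('a ^ 'n) set) (PiE UNIV (\<lambda>_. Rep))"
  proof (rule bij_betwI[where g = vec_lambda])
    show "vec_nth \<in> (Repn :: ('a ^ 'n) set) \<rightarrow> PiE UNIV (\<lambda>_. Rep)" by (auto simp: Repn_def)
    show "vec_lambda \<in> PiE UNIV (\<lambda>_. Rep) \<rightarrow> (Repn :: ('a ^ 'n) set)" by (auto simp: Repn_def)
  qed auto
  have "card (PiE (UNIV :: 'n set) (\<lambda>_. Rep)) = q ^ CARD('n)"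
    using Rep_card by (simp add: card_PiE)
  moreover have "finite (PiE (UNIV :: 'n set) (\<lambda>_. Rep))" using Rep_card by (simp add: finite_PiE)
  ultimately show "finite (Repn :: ('a ^ 'n) set)" "card (Repn :: ('a ^ 'n) set) = q ^ CARD('n)"
    using bij_betw_finite[OF bij] bij_betw_same_card[OF bij] by auto
qed

lemma Repn_intvecs: "r \<in> Repn \<Longrightarrow> r \<in> intvecs v"
  by (auto simp: Repn_def intvecs_dv Rep_dv0)

lemma cos_split:
  assumes c: "(c::'a^'n) \<in> intvecs v"
  shows "cos c m = (\<Union>r\<in>Repn. cos (c + sc (\<pi>^m) r) (Suc m))"
proof
  show "cos c m \<subseteq> (\<Union>r\<in>Repn. cos (c + sc (\<pi>^m) r) (Suc m))"
  proof
    fix y assume y: "y \<in> cos c m"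
    define w where "w i = (y $ i - c $ i) / \<pi>^m" for i
    have yw: "y $ i - c $ i = \<pi>^m * w i" for i using pi_nz by (simp add: w_def)
    have "dv 0 (w i)" for i
    proof -
      have "dv (int m) (y $ i - c $ i)" using y by (simp add: cos_def)
      then show ?thesis unfolding yw dv_pi_mult by simp
    qed
    then have ex: "\<forall>i. \<exists>r. r \<in> Rep \<and> dv 1 (w i - r)" using Rep_cover by blast
    from choice[OF ex] obtain rf where rf: "\<And>i. rf i \<in> Rep \<and> dv 1 (w i - rf i)" by blast
    let ?r = "vec_lambda rf :: 'a ^ 'n"
    have "?r \<in> Repn" using rf by (simp add: Repn_def)
    moreover have "y \<in> cos (c + sc (\<pi>^m) ?r) (Suc m)"
    proof -
      have "y $ i - (c + sc (\<pi>^m) ?r) $ i = \<pi>^m * (w i - rf i)" for i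
        using yw[of i] by (simp add: algebra_simps)
      then have "dv (int (Suc m)) (y $ i - (c + sc (\<pi>^m) ?r) $ i)" for i
        using rf[of i] dv_pi_mult[of "int (Suc m)" m "w i - rf i"] by simp
      then show ?thesis using y by (simp add: cos_def)
    qed
    ultimately show "y \<in> (\<Union>r\<in>Repn. cos (c + sc (\<pi>^m) r) (Suc m))" by blast
  qed
next
  show "(\<Union>r\<in>Repn. cos (c + sc (\<pi>^m) r) (Suc m)) \<subseteq> cos c m"
  proof clarify
    fix r y assume r: "r \<in> Repn" and y: "y \<in> cos (c + sc (\<pi>^m) r) (Suc m)"
    have "dv (int m) (y $ i - c $ i)" for i
    proof -
      have "dv (int (Suc m)) (y $ i - (c + sc (\<pi>^m) r) $ i)" using y by (simp add: cos_def)
      then have a: "dv (int m) (y $ i - (c + sc (\<pi>^m) r) $ i)" by (rule dv_mono) simp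
      have b: "dv (int m) (\<pi>^m * r $ i)" using dv_pi_mult[of "int m" m "r $ i"] r Rep_dv0 by (simp add: Repn_def)
      have "y $ i - c $ i = (y $ i - (c + sc (\<pi>^m) r) $ i) + \<pi>^m * r $ i" by simp
      then show ?thesis using dv_add[OF a b] by simp
    qed
    then show "y \<in> cos c m" using y by (simp add: cos_def)
  qed
qed

lemma cos_split_disj:
  "disjoint_family_on (\<lambda>r. cos ((c::'a^'n) + sc (\<pi>^m) r) (Suc m)) Repn"
unfolding disjoint_family_on_def
proof (intro ballI impI)
  fix r r' :: "'a^'n" assume r: "r \<in> Repn" "r' \<in> Repn" "r \<noteq> r'"
  show "cos (c + sc (\<pi>^m) r) (Suc m) \<inter> cos (c + sc (\<pi>^m) r') (Suc m) = {}"
  proof (rule ccontr)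
    assume "cos (c + sc (\<pi>^m) r) (Suc m) \<inter> cos (c + sc (\<pi>^m) r') (Suc m) \<noteq> {}"
    then obtain y where y: "y \<in> cos (c + sc (\<pi>^m) r) (Suc m)" "y \<in> cos (c + sc (\<pi>^m) r') (Suc m)" by blast
    have "r $ i = r' $ i" for i
    proof -
      have "dv (int (Suc m)) (y $ i - (c + sc (\<pi>^m) r') $ i)" "dv (int (Suc m)) (y $ i - (c + sc (\<pi>^m) r) $ i)"
        using y unfolding cos_def by blast+
      then have "dv (int (Suc m)) ((y $ i - (c + sc (\<pi>^m) r') $ i) - (y $ i - (c + sc (\<pi>^m) r) $ i))"
        by (rule dv_diff)
      moreover have "(y $ i - (c + sc (\<pi>^m) r') $ i) - (y $ i - (c + sc (\<pi>^m) r) $ i) = \<pi>^m * (r $ i - r' $ i)"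
        by (simp add: algebra_simps)
      ultimately have "dv 1 (r $ i - r' $ i)" using dv_pi_mult[of "int (Suc m)" m] by simp
      then show ?thesis using Rep_sep r by (simp add: Repn_def)
    qed
    then show False using r(3) by (simp add: vec_eq_iff)
  qed
qed

end


context vfM begin

lemma measure_cos_step:
  assumes c: "c \<in> intvecs v"
  shows "measure M (cos c m) = real q ^ CARD('n) * measure M (cos c (Suc m))"
proof -
  have ci: "c + sc (\<pi>^m) r \<in> intvecs v" if "r \<in> Repn" for r
  proof -
    have "dv 0 (\<pi>^m)" using dv_pipow[of m] by (rule dv_mono) simp
    then show ?thesis using c Repn_intvecs[OF that] by (simp add: intvecs_dv dv_add dv_mult_l)
  qed
  have "measure M (cos c m) = (\<Sum>r\<in>Repn. measure M (cos (c + sc (\<pi>^m) r) (Suc m)))"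
    unfolding cos_split[OF c, of m]
  proof (rule measure_finite_Union)
    show "finite (Repn :: ('a^'n) set)" by (rule Repn_card(1))
    show "(\<lambda>r. cos (c + sc (\<pi> ^ m) r) (Suc m)) ` Repn \<subseteq> sets M"
      using ci cos_sets by blast
    show "disjoint_family_on (\<lambda>r. cos (c + sc (\<pi> ^ m) r) (Suc m)) Repn" by (rule cos_split_disj)
    show "\<And>i. emeasure M (cos (c + sc (\<pi> ^ m) i) (Suc m)) \<noteq> \<infinity>" by (rule finite_emeasure)
  qed
  also have "\<dots> = (\<Sum>r\<in>(Repn::('a^'n) set). measure M (cos c (Suc m)))"
    using ci c measure_cos_indep by (intro sum.cong refl) blast
  also have "\<dots> = real q ^ CARD('n) * measure M (cos c (Suc m))"
  proof -
    have "card (Repn::('a^'n) set) = q ^ CARD('n)" by (rule Repn_card(2))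
    then show ?thesis by simp
  qed
  finally show ?thesis .
qed

lemma measure_cos: assumes c: "c \<in> intvecs v"
  shows "measure M (cos c m) = 1 / real q ^ (CARD('n) * m)"
proof (induction m)
  case 0
  have "measure M (cos c 0) = 1" using cos0[OF c] M1 spaceM by (simp add: measure_def)
  then show ?case by simp
next
  case (Suc m)
  have q: "real q ^ CARD('n) > 0" using q_ge2 by simp
  have "real q ^ (CARD('n) * Suc m) = real q ^ CARD('n) * real q ^ (CARD('n) * m)"
    by (simp add: power_add)
  then show ?case using measure_cos_step[OF c, of m] Suc q
    by (simp add: field_simps)
qed

end


context vfM begin

lemma gen_bij_measure:
  assumes f: "f \<in> measurable M M" and g: "g \<in> measurable M M"
    and gf: "\<And>x. x \<in> space M \<Longrightarrow> f (g x) = x"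
    and d: "distr M M f = M"
    and S: "S \<subseteq> space M"
  shows "measure M (f -` S \<inter> space M) = measure M S"
proof (cases "S \<in> sets M")
  case True
  then show ?thesis using measure_distr[OF f True] d by simp
next
  case False
  have "f -` S \<inter> space M \<notin> sets M"
  proof
    assume "f -` S \<inter> space M \<in> sets M"
    then have "g -` (f -` S \<inter> space M) \<inter> space M \<in> sets M" by (rule measurable_sets[OF g])
    moreover have "g -` (f -` S \<inter> space M) \<inter> space M = S"
      using S gf measurable_space[OF g] by auto
    ultimately show False using False by simp
  qed
  then show ?thesis using False by (simp add: measure_notin_sets)
qed

lemma measure_eq_gen2:
  assumes s1: "sets K1 = sets M" and s2: "sets K2 = sets M"
    and eq: "\<And>c m. c \<in> intvecs v \<Longrightarrow> emeasure K1 (cos c m) = emeasure K2 (cos c m)"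
    and fin: "emeasure K1 (intvecs v) \<noteq> \<infinity>"
  shows "K1 = K2"
proof (rule measure_eqI_generator_eq[OF int_stable, of "intvecs v" K1 K2 "\<lambda>_. (intvecs v :: ('a^'n) set)"])
  show "insert {} (add_cosets v \<pi>) \<subseteq> Pow (intvecs v)" using gen_sub by blast
  show "\<And>X. X \<in> insert {} (add_cosets v \<pi>) \<Longrightarrow> emeasure K1 X = emeasure K2 X"
    unfolding add_cosets_eq using eq by auto
  show "sets K1 = sigma_sets (intvecs v) (insert {} (add_cosets v \<pi>))" using s1 sets_alt by simp
  show "sets K2 = sigma_sets (intvecs v) (insert {} (add_cosets v \<pi>))" using s2 sets_alt by simp
  have z: "(0::'a^'n) \<in> intvecs v" by (simp add: intvecs_dv)
  then have "intvecs v = cos (0::'a^'n) 0" by (rule cos0[symmetric])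
  then have "(intvecs v :: ('a^'n) set) \<in> add_cosets v \<pi>" unfolding add_cosets_eq using z by blast
  then show "range (\<lambda>_. intvecs v) \<subseteq> insert {} (add_cosets v \<pi> :: ('a^'n) set set)" by auto
  show "(\<Union>i. intvecs v) = intvecs v" by simp
  show "\<And>i. emeasure K1 (intvecs v) \<noteq> \<infinity>" using fin .
qed

lemma meas_crit:
  assumes "f \<in> intvecs v \<rightarrow> intvecs v"
    and "\<And>c m. c \<in> intvecs v \<Longrightarrow> f -` cos c m \<inter> intvecs v \<in> sets M"
  shows "f \<in> measurable M M"
proof (rule measurable_sigma_sets[OF setsM gen_sub])
  show "f \<in> space M \<rightarrow> intvecs v" using assms(1) spaceM by simp
  show "\<And>y. y \<in> add_cosets v \<pi> \<Longrightarrow> f -` y \<inter> space M \<in> sets M"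
    unfolding add_cosets_eq spaceM using assms(2) by blast
qed

lemma emeasure_cos: "c \<in> intvecs v \<Longrightarrow> emeasure M (cos c m) = ennreal (1 / real q ^ (CARD('n) * m))"
  using measure_cos finite_measure.emeasure_eq_measure[OF finM] by simp

lemma unit_dv0: "v u = 0 \<Longrightarrow> dv 0 u" by (simp add: dv_def)
lemma unit_inv: "v u = 0 \<Longrightarrow> u \<noteq> 0 \<Longrightarrow> dv 0 (inverse u)" by (simp add: dv_def vinv)

lemma unit_pre:
  assumes u: "v u = 0" "u \<noteq> 0"
  shows "sc u -` cos c m \<inter> intvecs v = cos (sc (inverse u) c) m"
proof -
  have "dv (int m) (u * x - c) \<longleftrightarrow> dv (int m) (x - inverse u * c)" for x c
  proof -
    have "u * x - c = u * (x - inverse u * c)" using u by (simp add: algebra_simps)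
    then show ?thesis using dv_unit_mult[OF u] by simp
  qed
  moreover have "x \<in> intvecs v \<Longrightarrow> sc u x \<in> intvecs v" for x by (rule sc_intvecs[OF unit_dv0[OF u(1)]])
  ultimately show ?thesis by (auto simp: cos_def)
qed

lemma unit_meas:
  assumes u: "v u = 0" "u \<noteq> 0"
  shows "sc u \<in> measurable M M"
proof (rule meas_crit)
  show "sc u \<in> intvecs v \<rightarrow> intvecs v" using sc_intvecs[OF unit_dv0[OF u(1)]] by blast
  fix c :: "'a^'n" and m assume c: "c \<in> intvecs v"
  have "sc (inverse u) c \<in> intvecs v" using sc_intvecs[OF unit_inv[OF u] c] .
  then show "sc u -` cos c m \<inter> intvecs v \<in> sets M" unfolding unit_pre[OF u] by (rule cos_sets)
qed

lemma unit_distr: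
  assumes u: "v u = 0" "u \<noteq> 0"
  shows "distr M M (sc u) = M"
proof (rule measure_eq_gen)
  show "sets (distr M M (sc u)) = sets M" by simp
  fix c :: "'a^'n" and m assume c: "c \<in> intvecs v"
  have c': "sc (inverse u) c \<in> intvecs v" using sc_intvecs[OF unit_inv[OF u] c] .
  have "emeasure (distr M M (sc u)) (cos c m) = emeasure M (sc u -` cos c m \<inter> space M)"
    using unit_meas[OF u] cos_sets[OF c] by (rule emeasure_distr)
  also have "\<dots> = emeasure M (cos (sc (inverse u) c) m)" unfolding spaceM unit_pre[OF u] ..
  also have "\<dots> = emeasure M (cos c m)" using emeasure_cos c c' by simp
  finally show "emeasure (distr M M (sc u)) (cos c m) = emeasure M (cos c m)" .
qed

lemma unit_scale_measure:
  assumes u: "v u = 0" "u \<noteq> 0" and S: "S \<subseteq> intvecs v"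
  shows "measure M (sc u -` S \<inter> intvecs v) = measure M S"
proof -
  have u': "v (inverse u) = 0" "inverse u \<noteq> 0" using u by (simp_all add: vinv)
  show ?thesis
    using gen_bij_measure[OF unit_meas[OF u] unit_meas[OF u'] _ unit_distr[OF u], of S] S spaceM u
    by (simp add: vec_eq_iff sc_def)
qed

end


context vf begin

definition Pset :: "('a ^ 'n) set" where "Pset = cos 0 1"

lemma Pset_mem: "x \<in> Pset \<longleftrightarrow> (\<forall>i. dv 1 (x $ i))"
  by (auto simp: Pset_def cos_def intvecs_dv intro: dv_mono)

lemma Pset_intvecs: "Pset \<subseteq> intvecs v" unfolding Pset_def by (rule cos_subset)

lemma dv1_div: "dv 1 x \<Longrightarrow> dv 0 (inverse \<pi> * x)"
proof -
  assume "dv 1 x"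
  moreover have e: "\<pi> ^ 1 * (inverse \<pi> * x) = x" using pi_nz by (simp add: field_simps)
  moreover have "dv 1 (\<pi> ^ 1 * (inverse \<pi> * x)) = dv 0 (inverse \<pi> * x)"
    using dv_pi_mult[of 1 1 "inverse \<pi> * x"] by (simp only: of_nat_1 diff_self)
  ultimately show ?thesis by metis
qed

lemma pi_sc_intvecs: "x \<in> intvecs v \<Longrightarrow> sc \<pi> x \<in> Pset"
  unfolding Pset_mem intvecs_dv using dv_pi_mult[of 1 1] by simp

lemma pi_sc_int: "x \<in> intvecs v \<Longrightarrow> sc \<pi> x \<in> intvecs v"
  using pi_sc_intvecs Pset_intvecs by blast

lemma pi_pre_Suc:
  assumes c: "c \<in> Pset"
  shows "sc \<pi> -` cos c (Suc k) \<inter> intvecs v = cos (sc (inverse \<pi>) c) k"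
proof -
  have "\<pi> * x - c $ i = \<pi>^1 * (x - inverse \<pi> * c $ i)" for x i using pi_nz by (simp add: algebra_simps)
  then have "dv (int (Suc k)) (\<pi> * x - c $ i) \<longleftrightarrow> dv (int k) (x - inverse \<pi> * c $ i)" for x i
    using dv_pi_mult[of "int (Suc k)" 1] by simp
  moreover have "x \<in> intvecs v \<Longrightarrow> sc \<pi> x \<in> intvecs v" for x
    using pi_sc_intvecs Pset_intvecs by blast
  ultimately show ?thesis by (auto simp: cos_def)
qed

lemma pi_pre_Suc_out:
  assumes c: "c \<notin> Pset"
  shows "sc \<pi> -` cos c (Suc k) \<inter> intvecs v = {}"
proof (rule ccontr)
  assume "sc \<pi> -` cos c (Suc k) \<inter> intvecs v \<noteq> {}"
  then obtain x where x: "x \<in> intvecs v" "sc \<pi> x \<in> cos c (Suc k)" by blast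
  have "dv 1 (c $ i)" for i
  proof -
    have "dv (int (Suc k)) (\<pi> * x $ i - c $ i)" using x by (simp add: cos_def)
    then have a: "dv 1 (\<pi> * x $ i - c $ i)" by (rule dv_mono) simp
    have b: "dv 1 (\<pi> * x $ i)" using pi_sc_intvecs[OF x(1)] by (simp add: Pset_mem)
    have "c $ i = \<pi> * x $ i - (\<pi> * x $ i - c $ i)" by simp
    then show ?thesis using dv_diff[OF b a] by simp
  qed
  then show False using c by (simp add: Pset_mem)
qed

definition hinv :: "'a ^ 'n \<Rightarrow> 'a ^ 'n" where
  "hinv x = (if x \<in> Pset then sc (inverse \<pi>) x else 0)"

lemma hinv_intvecs: "hinv x \<in> intvecs v"
  by (auto simp: hinv_def Pset_mem intvecs_dv dv1_div)

lemma hinv_pre: assumes cI: "c \<in> intvecs v" shows "hinv -` cos c m \<inter> intvecs v =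
   cos (sc \<pi> c) (Suc m) \<union> (if 0 \<in> cos c m then intvecs v - Pset else {})"
proof -
  have key: "x \<in> Pset \<Longrightarrow> sc (inverse \<pi>) x \<in> cos c m \<longleftrightarrow> x \<in> cos (sc \<pi> c) (Suc m)" for x
  proof -
    assume xP: "x \<in> Pset"
    have xi: "x \<in> intvecs v" using xP Pset_intvecs by blast
    have "x $ i - \<pi> * c $ i = \<pi>^1 * (inverse \<pi> * x $ i - c $ i)" for i using pi_nz by (simp add: algebra_simps)
    then have "dv (int (Suc m)) (x $ i - \<pi> * c $ i) \<longleftrightarrow> dv (int m) (inverse \<pi> * x $ i - c $ i)" for i
      using dv_pi_mult[of "int (Suc m)" 1] by simp
    moreover have "sc (inverse \<pi>) x \<in> intvecs v" using xP by (simp add: Pset_mem intvecs_dv dv1_div)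
    ultimately show ?thesis using xi by (simp add: cos_def)
  qed
  have inP: "x \<in> cos (sc \<pi> c) (Suc m) \<Longrightarrow> c \<in> intvecs v \<Longrightarrow> x \<in> Pset" for x
  proof -
    assume x: "x \<in> cos (sc \<pi> c) (Suc m)" and c: "c \<in> intvecs v"
    have "dv 1 (x $ i)" for i
    proof -
      have "dv (int (Suc m)) (x $ i - \<pi> * c $ i)" using x by (simp add: cos_def)
      then have a: "dv 1 (x $ i - \<pi> * c $ i)" by (rule dv_mono) simp
      have b: "dv 1 (\<pi> * c $ i)" using pi_sc_intvecs[OF c] by (simp add: Pset_mem)
      show ?thesis using dv_add[OF a b] by simp
    qed
    then show ?thesis by (simp add: Pset_mem)
  qed
  show ?thesis
  proof (intro set_eqI iffI)
    fix x assume x: "x \<in> hinv -` cos c m \<inter> intvecs v"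
    show "x \<in> cos (sc \<pi> c) (Suc m) \<union> (if 0 \<in> cos c m then intvecs v - Pset else {})"
    proof (cases "x \<in> Pset")
      case True then show ?thesis using x key by (simp add: hinv_def)
    next
      case False then show ?thesis using x by (simp add: hinv_def)
    qed
  next
    fix x assume x: "x \<in> cos (sc \<pi> c) (Suc m) \<union> (if 0 \<in> cos c m then intvecs v - Pset else {})"
    show "x \<in> hinv -` cos c m \<inter> intvecs v"
    proof (cases "x \<in> cos (sc \<pi> c) (Suc m)")
      case True
      have "c \<in> intvecs v" by (rule cI)
      then have "x \<in> Pset" using inP True by blast
      then show ?thesis using True key cos_subset by (auto simp: hinv_def)
    next
      case False
      then have "0 \<in> cos c m" "x \<in> intvecs v - Pset" using x by (auto split: if_splits)
      then show ?thesis by (simp add: hinv_def)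
    qed
  qed
qed

end


context vfM begin

lemma Pset_sets: "Pset \<in> sets M" unfolding Pset_def by (rule cos_sets) (simp add: intvecs_dv)

lemma pi_meas: "sc \<pi> \<in> measurable M M"
proof (rule meas_crit)
  show "sc \<pi> \<in> intvecs v \<rightarrow> intvecs v" using pi_sc_int by blast
  fix c :: "'a^'n" and m assume c: "c \<in> intvecs v"
  show "sc \<pi> -` cos c m \<inter> intvecs v \<in> sets M"
  proof (cases m)
    case 0
    have "sc \<pi> -` cos c m \<inter> intvecs v = space M"
      using 0 cos0[OF c] spaceM pi_sc_int by auto
    then show ?thesis by simp
  next
    case (Suc k)
    show ?thesis
    proof (cases "c \<in> Pset")
      case True
      have "sc (inverse \<pi>) c \<in> intvecs v" using True by (simp add: Pset_mem intvecs_dv dv1_div)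
      then show ?thesis unfolding Suc pi_pre_Suc[OF True] by (rule cos_sets)
    next
      case False
      then show ?thesis unfolding Suc pi_pre_Suc_out[OF False] by simp
    qed
  qed
qed

lemma hinv_meas: "hinv \<in> measurable M M"
proof (rule meas_crit)
  show "hinv \<in> intvecs v \<rightarrow> intvecs v" using hinv_intvecs by blast
  fix c :: "'a^'n" and m assume c: "c \<in> intvecs v"
  have c': "sc \<pi> c \<in> intvecs v" using pi_sc_int[OF c] .
  have "intvecs v - Pset \<in> sets M" using Pset_sets spaceM sets.compl_sets by metis
  then show "hinv -` cos c m \<inter> intvecs v \<in> sets M"
    unfolding hinv_pre[OF c] using cos_sets[OF c'] by auto
qed

lemma pi_img: assumes S: "(S :: ('a^'n) set) \<subseteq> intvecs v" shows "sc \<pi> ` S = hinv -` S \<inter> intvecs v \<inter> Pset"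
proof (intro set_eqI iffI)
  fix x assume "x \<in> sc \<pi> ` S"
  then obtain y where y: "y \<in> S" "x = sc \<pi> y" by blast
  have yi: "y \<in> intvecs v" using y S by blast
  have xP: "x \<in> Pset" using pi_sc_intvecs[OF yi] y by simp
  have "hinv x = sc (inverse \<pi>) x" using xP by (simp add: hinv_def)
  also have "\<dots> = y" using y(2) pi_nz by (simp add: vec_eq_iff)
  finally have "hinv x = y" .
  then show "x \<in> hinv -` S \<inter> intvecs v \<inter> Pset"
    using y xP pi_sc_int[OF yi] by auto
next
  fix x assume x: "x \<in> hinv -` S \<inter> intvecs v \<inter> Pset"
  then have "x \<in> Pset" "hinv x \<in> S" by auto
  then have "sc (inverse \<pi>) x \<in> S" by (simp add: hinv_def)
  moreover have "x = sc \<pi> (sc (inverse \<pi>) x)" using pi_nz by (simp add: vec_eq_iff)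
  ultimately show "x \<in> sc \<pi> ` S" by blast
qed

lemma pi_preimg: assumes S: "(S :: ('a^'n) set) \<subseteq> intvecs v" shows "sc \<pi> -` (sc \<pi> ` S) \<inter> intvecs v = S"
proof -
  have inj: "inj (sc \<pi> :: 'a^'n \<Rightarrow> 'a^'n)" using pi_nz by (auto simp: inj_def vec_eq_iff)
  show ?thesis using S pi_sc_int by (auto dest: injD[OF inj])
qed

definition Dpi :: "('a ^ 'n) measure" where
  "Dpi = density M (\<lambda>x. ennreal (real q ^ CARD('n)) * indicator Pset x)"

lemma Dpi_emeasure: "A \<in> sets M \<Longrightarrow> emeasure Dpi A = ennreal (real q ^ CARD('n)) * emeasure M (Pset \<inter> A)"
proof -
  assume A: "A \<in> sets M"
  note Pset_sets[measurable]
  have "emeasure Dpi A = (\<integral>\<^sup>+ x. ennreal (real q ^ CARD('n)) * indicator Pset x * indicator A x \<partial>M)"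
    unfolding Dpi_def using A by (intro emeasure_density) auto
  also have "\<dots> = (\<integral>\<^sup>+ x. ennreal (real q ^ CARD('n)) * indicator (Pset \<inter> A) x \<partial>M)"
    by (simp add: indicator_inter_arith mult.assoc)
  also have "\<dots> = ennreal (real q ^ CARD('n)) * emeasure M (Pset \<inter> A)"
    using A Pset_sets by (intro nn_integral_cmult_indicator) auto
  finally show ?thesis .
qed

lemma pi_distr: "distr M M (sc \<pi>) = Dpi"
proof (rule measure_eq_gen2)
  show "sets (distr M M (sc \<pi>)) = sets M" by simp
  show "sets Dpi = sets M" by (simp add: Dpi_def)
  show "emeasure (distr M M (sc \<pi>)) (intvecs v) \<noteq> \<infinity>"
    using emeasure_distr[OF pi_meas sets.top] spaceM finite_emeasure by simp
  fix c :: "'a^'n" and m assume c: "c \<in> intvecs v"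
  have qp: "real q > 0" using q_ge2 by simp
  have ed: "emeasure (distr M M (sc \<pi>)) (cos c m) = emeasure M (sc \<pi> -` cos c m \<inter> intvecs v)"
    using emeasure_distr[OF pi_meas cos_sets[OF c]] spaceM by simp
  have eD: "emeasure Dpi (cos c m) = ennreal (real q ^ CARD('n)) * emeasure M (Pset \<inter> cos c m)"
    using Dpi_emeasure[OF cos_sets[OF c]] .
  show "emeasure (distr M M (sc \<pi>)) (cos c m) = emeasure Dpi (cos c m)"
  proof (cases m)
    case 0
    have "sc \<pi> -` cos c m \<inter> intvecs v = intvecs v"
      using 0 cos0[OF c] pi_sc_int by auto
    then have "emeasure (distr M M (sc \<pi>)) (cos c m) = 1" using ed M1 spaceM by simp
    moreover have "Pset \<inter> cos c m = cos 0 1" using 0 cos0[OF c] Pset_intvecs by (auto simp: Pset_def)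
    then have "emeasure Dpi (cos c m) = ennreal (real q ^ CARD('n)) * ennreal (1 / real q ^ CARD('n))"
      using eD emeasure_cos[of 0 1] by (simp add: intvecs_dv)
    then have "emeasure Dpi (cos c m) = 1" using qp by (simp add: ennreal_mult[symmetric])
    ultimately show ?thesis by simp
  next
    case (Suc k)
    show ?thesis
    proof (cases "c \<in> Pset")
      case True
      have ci: "sc (inverse \<pi>) c \<in> intvecs v" using True by (simp add: Pset_mem intvecs_dv dv1_div)
      have "emeasure (distr M M (sc \<pi>)) (cos c m) = ennreal (1 / real q ^ (CARD('n) * k))"
        using ed pi_pre_Suc[OF True] Suc emeasure_cos[OF ci] by simp
      moreover have "Pset \<inter> cos c m = cos c m"
      proof -
        have "cos c m \<subseteq> cos c 1" using Suc cos_mono[of 1 m c] by simp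
        moreover have "cos c 1 = Pset" unfolding Pset_def using True by (intro cos_eq) (simp add: Pset_def)
        ultimately show ?thesis by blast
      qed
      then have "emeasure Dpi (cos c m) = ennreal (real q ^ CARD('n)) * ennreal (1 / real q ^ (CARD('n) * Suc k))"
        using eD emeasure_cos[OF c] Suc by simp
      moreover have "real q ^ CARD('n) * (1 / real q ^ (CARD('n) * Suc k)) = 1 / real q ^ (CARD('n) * k)"
        using qp by (simp add: power_add field_simps)
      ultimately show ?thesis using qp by (simp add: ennreal_mult[symmetric])
    next
      case False
      have "Pset \<inter> cos c m = {}"
      proof (rule ccontr)
        assume "Pset \<inter> cos c m \<noteq> {}"
        then obtain x where "x \<in> Pset" "x \<in> cos c m" by blast
        then have "x \<in> cos c 1" "x \<in> cos 0 1" using Suc cos_mono[of 1 m c] by (auto simp: Pset_def)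
        then have "cos c 1 = Pset" using cos_eq[of x c 1] cos_eq[of x 0 1] by (simp add: Pset_def)
        then show False using False c_in_cos[OF c, of 1] by simp
      qed
      then show ?thesis using ed eD pi_pre_Suc_out[OF False] Suc by simp
    qed
  qed
qed

lemma pi_scale_measure:
  assumes S: "S \<subseteq> intvecs v"
  shows "measure M (sc \<pi> ` S) = measure M S / real q ^ CARD('n)"
proof (cases "S \<in> sets M")
  case True
  have img: "sc \<pi> ` S \<in> sets M"
  proof -
    have "hinv -` S \<inter> space M \<in> sets M" using measurable_sets[OF hinv_meas True] .
    then have "hinv -` S \<inter> intvecs v \<inter> Pset \<in> sets M" using Pset_sets spaceM by auto
    then show ?thesis using pi_img[OF S] by simp
  qed
  have sub: "sc \<pi> ` S \<subseteq> Pset" using S by (auto intro: pi_sc_intvecs)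
  have "measure M S = measure M (sc \<pi> -` (sc \<pi> ` S) \<inter> space M)" using pi_preimg[OF S] spaceM by simp
  also have "\<dots> = measure (distr M M (sc \<pi>)) (sc \<pi> ` S)" using measure_distr[OF pi_meas img] by simp
  also have "\<dots> = measure Dpi (sc \<pi> ` S)" using pi_distr by simp
  also have "\<dots> = real q ^ CARD('n) * measure M (sc \<pi> ` S)"
    unfolding measure_def Dpi_emeasure[OF img] using sub
    by (simp add: Int_absorb1 enn2real_mult)
  finally show ?thesis using q_ge2 by (simp add: field_simps)
next
  case False
  have "sc \<pi> ` S \<notin> sets M"
  proof
    assume "sc \<pi> ` S \<in> sets M"
    then have "sc \<pi> -` (sc \<pi> ` S) \<inter> space M \<in> sets M" by (rule measurable_sets[OF pi_meas])
    then show False using pi_preimg[OF S] spaceM False by simp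
  qed
  then show ?thesis using False by (simp add: measure_notin_sets)
qed

end


lemma diagQ_sc: "diagQ a (sc c x) = c^2 * diagQ a x"
  unfolding diagQ_def by (simp add: sum_distrib_left power_mult_distrib algebra_simps)

context vf begin

lemma two_dv: "(\<exists>w\<in>valring v. y = 2 * \<pi>^l * w) \<longleftrightarrow> dv (v 2 + int l) y"
proof
  assume "\<exists>w\<in>valring v. y = 2 * \<pi>^l * w"
  then obtain w where w: "dv 0 w" "y = 2 * \<pi>^l * w" by (auto simp: valring_dv)
  have "dv (v 2 + int l) (2 * \<pi>^l)" using dv_mult[of "v 2" 2 "int l" "\<pi>^l"] dv_pipow by (simp add: dv_def)
  then show "dv (v 2 + int l) y" using dv_mult_r[OF _ w(1)] w(2) by simp
next
  assume d: "dv (v 2 + int l) y"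
  have nz: "2 * \<pi>^l \<noteq> 0" using two_nz pi_nz by simp
  have v2l: "v (2 * \<pi>^l) = v 2 + int l" using vmult[OF two_nz] pi_nz vpipow by simp
  show "\<exists>w\<in>valring v. y = 2 * \<pi>^l * w"
  proof
    show "y = 2 * \<pi>^l * (y / (2 * \<pi>^l))" using nz by simp
    show "y / (2 * \<pi>^l) \<in> valring v" unfolding valring_dv
      using d nz v2l by (cases "y = 0") (auto simp: dv_def vdiv)
  qed
qed

definition Sset :: "'a ^ 'n \<Rightarrow> nat \<Rightarrow> 'a \<Rightarrow> ('a ^ 'n) set" where
  "Sset a l \<rho> = {x \<in> intvecs v. dv (v 2 + int l) (diagQ a x - \<rho>)}"

lemma Sset_sub: "Sset a l \<rho> \<subseteq> intvecs v" by (auto simp: Sset_def)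

lemma XBl_Sset: "XBl v \<pi> M a l \<rho> = measure M (Sset a l \<rho>)"
  unfolding XBl_def Sset_def two_dv ..

lemma Sset_cong: "dv (v 2 + int l) (\<rho> - \<rho>') \<Longrightarrow> Sset a l \<rho> = Sset a l \<rho>'"
proof -
  assume d: "dv (v 2 + int l) (\<rho> - \<rho>')"
  have "dv (v 2 + int l) (y - \<rho>) \<longleftrightarrow> dv (v 2 + int l) (y - \<rho>')" for y
  proof
    assume "dv (v 2 + int l) (y - \<rho>)"
    from dv_add[OF this d] show "dv (v 2 + int l) (y - \<rho>')" by simp
  next
    assume "dv (v 2 + int l) (y - \<rho>')"
    from dv_diff[OF this d] show "dv (v 2 + int l) (y - \<rho>)" by simp
  qed
  then show ?thesis by (simp add: Sset_def)
qed

lemma Sset_unit: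
  assumes u: "v u = 0" "u \<noteq> 0"
  shows "Sset a l (u^2 * \<rho>) = sc (inverse u) -` Sset a l \<rho> \<inter> intvecs v"
proof -
  have ui: "dv 0 (inverse u)" using u by (simp add: dv_def vinv)
  have "dv (v 2 + int l) (diagQ a x - u^2 * \<rho>) \<longleftrightarrow> dv (v 2 + int l) (diagQ a (sc (inverse u) x) - \<rho>)" for x
  proof -
    have "u * (u * (inverse u * inverse u)) = 1" using u by (simp add: field_simps)
    then have "diagQ a x - u^2 * \<rho> = u^2 * (diagQ a (sc (inverse u) x) - \<rho>)"
      using u by (simp add: diagQ_sc algebra_simps power2_eq_square)
    moreover have "v (u^2) = 0" "u^2 \<noteq> 0" using u vpow[of u 2] by simp_all
    ultimately show ?thesis using dv_unit_mult by simp
  qed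
  moreover have "x \<in> intvecs v \<Longrightarrow> sc (inverse u) x \<in> intvecs v" for x by (rule sc_intvecs[OF ui])
  ultimately show ?thesis by (auto simp: Sset_def)
qed

lemma Sset_pi:
  "sc \<pi> ` Sset a l \<rho> = Sset a (l + 2) (\<pi>^2 * \<rho>) \<inter> Pset"
proof (intro set_eqI iffI)
  have key: "dv (v 2 + int (l + 2)) (diagQ a (sc \<pi> y) - \<pi>^2 * \<rho>) \<longleftrightarrow> dv (v 2 + int l) (diagQ a y - \<rho>)" for y
  proof -
    have "diagQ a (sc \<pi> y) - \<pi>^2 * \<rho> = \<pi>^2 * (diagQ a y - \<rho>)" by (simp add: diagQ_sc algebra_simps)
    then show ?thesis using dv_pi_mult[of "v 2 + int (l + 2)" 2] by simp
  qed
  {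
    fix x assume "x \<in> sc \<pi> ` Sset a l \<rho>"
    then obtain y where y: "y \<in> Sset a l \<rho>" "x = sc \<pi> y" by blast
    have yi: "y \<in> intvecs v" using y(1) by (simp add: Sset_def)
    show "x \<in> Sset a (l + 2) (\<pi>^2 * \<rho>) \<inter> Pset"
      using y key[of y] pi_sc_int[OF yi] pi_sc_intvecs[OF yi] by (simp add: Sset_def)
  }
  {
    fix x assume x: "x \<in> Sset a (l + 2) (\<pi>^2 * \<rho>) \<inter> Pset"
    let ?y = "sc (inverse \<pi>) x"
    have xe: "x = sc \<pi> ?y" using pi_nz by (simp add: vec_eq_iff)
    have yi: "?y \<in> intvecs v" using x by (simp add: Pset_mem intvecs_dv dv1_div)
    have "dv (v 2 + int (l + 2)) (diagQ a (sc \<pi> ?y) - \<pi>^2 * \<rho>)" using x xe by (simp add: Sset_def)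
    then have "?y \<in> Sset a l \<rho>" using key[of ?y] yi by (simp add: Sset_def)
    then show "x \<in> sc \<pi> ` Sset a l \<rho>" using xe by blast
  }
qed

lemma Sset_in_P:
  fixes a :: "'a ^ 'n"
  assumes aniso: "\<forall>x. diagQ a x = 0 \<longrightarrow> x = 0"
    and ord_a: "\<forall>i. 0 \<le> v (a $ i) \<and> v (a $ i) \<le> 1"
    and l: "v 2 \<le> int l" and \<rho>: "dv (2 * v 2 + 2) \<rho>"
  shows "Sset a (l + 2) \<rho> \<subseteq> Pset"
proof
  fix x assume x: "x \<in> Sset a (l + 2) \<rho>"
  then have xi: "x \<in> intvecs v" and d: "dv (v 2 + int (l + 2)) (diagQ a x - \<rho>)" by (auto simp: Sset_def)
  have "dv (2 * v 2 + 2) (diagQ a x - \<rho>)" using d by (rule dv_mono) (use l in simp)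
  then have B: "dv (2 * v 2 + 2) (diagQ a x)" using dv_add[OF _ \<rho>] by fastforce
  show "x \<in> Pset"
  proof (rule ccontr)
    assume "x \<notin> Pset"
    then obtain i where "\<not> dv 1 (x $ i)" by (auto simp: Pset_mem)
    moreover have "dv 0 (x $ i)" using xi by (simp add: intvecs_dv)
    ultimately show False using aniso_key[OF aniso ord_a] B by blast
  qed
qed

end


context vf begin
definition rho :: "nat \<Rightarrow> 'a" where "rho m = 4 * \<pi>^(2*m)"

lemma dv_rho: "dv (2 * v 2 + 2 * int m) (rho m)"
proof -
  have "dv (2 * v 2) (4::'a)" using v4 by (simp add: dv_def)
  then show ?thesis unfolding rho_def using dv_mult[OF _ dv_pipow[of "2*m"]] by simp
qed

lemma rho_Suc: "rho (Suc m) = \<pi>^2 * rho m"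
  by (simp add: rho_def power_add power2_eq_square algebra_simps)
end

context vfM begin

lemma XBl_unit:
  assumes u: "v u = 0" "u \<noteq> 0"
  shows "XBl v \<pi> M (a::'a^'n) l (u^2 * \<rho>) = XBl v \<pi> M a l \<rho>"
proof -
  have u': "v (inverse u) = 0" "inverse u \<noteq> 0" using u by (simp_all add: vinv)
  show ?thesis unfolding XBl_Sset Sset_unit[OF u]
    using unit_scale_measure[OF u' Sset_sub] .
qed

lemma XBl_pi:
  assumes "Sset (a::'a^'n) (l + 2) (\<pi>^2 * \<rho>) \<subseteq> Pset"
  shows "XBl v \<pi> M a (l + 2) (\<pi>^2 * \<rho>) = XBl v \<pi> M a l \<rho> / real q ^ CARD('n)"
proof -
  have "Sset a (l + 2) (\<pi>^2 * \<rho>) = sc \<pi> ` Sset a l \<rho>" using Sset_pi assms by blast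
  then show ?thesis unfolding XBl_Sset using pi_scale_measure[OF Sset_sub] by simp
qed

lemma XBl_low:
  assumes "int l \<le> v 2 + 2 * int m"
  shows "XBl v \<pi> M (a::'a^'n) l (rho m) = XBl v \<pi> M a l 0"
proof -
  have "dv (v 2 + int l) (rho m)" using dv_rho[of m] by (rule dv_mono) (use assms v2 in simp)
  then have "dv (v 2 + int l) (rho m - 0)" by simp
  then show ?thesis unfolding XBl_Sset using Sset_cong by metis
qed

lemma XBl_rec:
  fixes a :: "'a ^ 'n"
  assumes aniso: "\<forall>x. diagQ a x = 0 \<longrightarrow> x = 0"
    and ord_a: "\<forall>i. 0 \<le> v (a $ i) \<and> v (a $ i) \<le> 1"
  shows "XBl v \<pi> M a (l + 2) (rho (Suc m)) - XBl v \<pi> M a (l + 2) 0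
       = (XBl v \<pi> M a l (rho m) - XBl v \<pi> M a l 0) / real q ^ CARD('n)"
proof (cases "int l \<le> v 2 + 2 * int m")
  case True
  have "int (l + 2) \<le> v 2 + 2 * int (Suc m)" using True by simp
  then show ?thesis using XBl_low[OF True] XBl_low[of "l+2" "Suc m"] by simp
next
  case False
  then have l: "v 2 \<le> int l" by simp
  have d1: "dv (2 * v 2 + 2) (rho (Suc m))" using dv_rho[of "Suc m"] by (rule dv_mono) simp
  have "XBl v \<pi> M a (l + 2) (rho (Suc m)) = XBl v \<pi> M a l (rho m) / real q ^ CARD('n)"
    unfolding rho_Suc using XBl_pi Sset_in_P[OF aniso ord_a l] d1 rho_Suc by metis
  moreover have "XBl v \<pi> M a (l + 2) 0 = XBl v \<pi> M a l 0 / real q ^ CARD('n)"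
    using XBl_pi[of a l 0] Sset_in_P[OF aniso ord_a l, of 0] by simp
  ultimately show ?thesis by (simp add: diff_divide_distrib)
qed

lemma XBl_low2: "l < 2 \<Longrightarrow> XBl v \<pi> M (a::'a^'n) l (rho (Suc m)) = XBl v \<pi> M a l 0"
  using v2 by (intro XBl_low) simp

lemma XBl_bound: "0 \<le> XBl v \<pi> M (a::'a^'n) l \<rho>" "XBl v \<pi> M (a::'a^'n) l \<rho> \<le> 1"
proof -
  show "0 \<le> XBl v \<pi> M a l \<rho>" by (simp add: XBl_Sset)
  have "measure M (Sset a l \<rho>) \<le> measure M (space M)"
    using finite_measure.bounded_measure[OF finM] by simp
  then show "XBl v \<pi> M a l \<rho> \<le> 1" using M1 by (simp add: XBl_Sset measure_def)
qed

end


lemma cpow_nat: "0 < q \<Longrightarrow> (of_nat q :: complex) powr w = exp (w * of_real (ln (real q)))"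
  by (simp add: powr_def)

lemma cpow_real: "0 < r \<Longrightarrow> complex_of_real r powr w = exp (w * of_real (ln r))"
  by (simp add: powr_def Ln_of_real)

lemma norm_cpow_nat: "1 < q \<Longrightarrow> Re w < 0 \<Longrightarrow> norm ((of_nat q :: complex) powr w) < 1"
proof -
  assume q: "1 < q" and w: "Re w < 0"
  have "norm ((of_nat q :: complex) powr w) = real q powr Re w"
    by (subst norm_powr_real_powr) auto
  also have "\<dots> < 1" using q w by (intro powr_less_one) auto
  finally show ?thesis .
qed

context vfM begin

abbreviation zz :: "complex \<Rightarrow> complex" where "zz \<beta> \<equiv> of_nat q powr (- \<beta>)"

lemma norm_zz: "0 < Re \<beta> \<Longrightarrow> norm (zz \<beta>) < 1"
  using q_ge2 by (intro norm_cpow_nat) auto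

lemma XB_term_bound: "norm ((zz \<beta>)^l * complex_of_real (XBl v \<pi> M (a::'a^'n) l \<rho>)) \<le> norm (zz \<beta>) ^ l"
proof -
  have "norm (complex_of_real (XBl v \<pi> M a l \<rho>)) \<le> 1" using XBl_bound[of a l \<rho>] by simp
  then show ?thesis by (simp add: norm_mult norm_power mult_left_le)
qed

lemma XB_summable: "0 < Re \<beta> \<Longrightarrow> summable (\<lambda>l. (zz \<beta>)^l * complex_of_real (XBl v \<pi> M (a::'a^'n) l \<rho>))"
  by (rule summable_comparison_test'[OF summable_geometric[of "norm (zz \<beta>)"] XB_term_bound])
     (use norm_zz in simp)

lemma XB_norm_bound: "0 < Re \<beta> \<Longrightarrow> norm (XB v \<pi> q M (a::'a^'n) \<beta> \<rho>) \<le> 1 / (1 - norm (zz \<beta>))"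
proof -
  assume b: "0 < Re \<beta>"
  have s: "summable (\<lambda>l. norm ((zz \<beta>)^l * complex_of_real (XBl v \<pi> M a l \<rho>)))"
    by (rule summable_comparison_test'[OF summable_geometric[of "norm (zz \<beta>)"]]) (use norm_zz[OF b] XB_term_bound in simp_all)
  have "norm (XB v \<pi> q M a \<beta> \<rho>) \<le> (\<Sum>l. norm ((zz \<beta>)^l * complex_of_real (XBl v \<pi> M a l \<rho>)))"
    unfolding XB_def by (rule summable_norm[OF s])
  also have "\<dots> \<le> (\<Sum>l. norm (zz \<beta>) ^ l)"
    using s norm_zz[OF b] XB_term_bound by (intro suminf_le) auto
  also have "\<dots> = 1 / (1 - norm (zz \<beta>))" using norm_zz[OF b] by (simp add: suminf_geometric)
  finally show ?thesis .
qed

lemma XB_rec: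
  fixes a :: "'a ^ 'n"
  assumes aniso: "\<forall>x. diagQ a x = 0 \<longrightarrow> x = 0"
    and ord_a: "\<forall>i. 0 \<le> v (a $ i) \<and> v (a $ i) \<le> 1"
    and b: "0 < Re \<beta>"
  shows "XB v \<pi> q M a \<beta> (rho (Suc m)) - XB v \<pi> q M a \<beta> 0
     = ((zz \<beta>)^2 / of_nat q ^ CARD('n)) * (XB v \<pi> q M a \<beta> (rho m) - XB v \<pi> q M a \<beta> 0)"
proof -
  let ?z = "zz \<beta>"
  define d where "d l k = complex_of_real (XBl v \<pi> M a l (rho k)) - complex_of_real (XBl v \<pi> M a l 0)" for l k
  have D: "XB v \<pi> q M a \<beta> (rho k) - XB v \<pi> q M a \<beta> 0 = (\<Sum>l. ?z^l * d l k)" for k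
    unfolding XB_def d_def using XB_summable[OF b, of a "rho k"] XB_summable[OF b, of a 0]
    by (subst suminf_diff) (simp_all add: algebra_simps)
  have sk: "summable (\<lambda>l. ?z^l * d l k)" for k
    unfolding d_def using summable_diff[OF XB_summable[OF b, of a "rho k"] XB_summable[OF b, of a 0]]
    by (simp add: algebra_simps)
  have low: "(\<Sum>l<2. ?z^l * d l (Suc m)) = 0"
    by (simp add: d_def XBl_low2 numeral_2_eq_2)
  have shift: "?z^(l + 2) * d (l + 2) (Suc m) = (?z^2 / of_nat q ^ CARD('n)) * (?z^l * d l m)" for l
  proof -
    have "d (l + 2) (Suc m) = d l m / of_nat q ^ CARD('n)"
      unfolding d_def using arg_cong[OF XBl_rec[OF aniso ord_a, of l m], of complex_of_real]
      by (simp add: diff_divide_distrib)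
    then show ?thesis by (simp add: power_add power2_eq_square field_simps)
  qed
  have "(\<Sum>l. ?z^l * d l (Suc m)) = (\<Sum>l. ?z^(l + 2) * d (l + 2) (Suc m)) + (\<Sum>l<2. ?z^l * d l (Suc m))"
    by (rule suminf_split_initial_segment[OF sk])
  also have "\<dots> = (\<Sum>l. (?z^2 / of_nat q ^ CARD('n)) * (?z^l * d l m))" using low shift by simp
  also have "\<dots> = (?z^2 / of_nat q ^ CARD('n)) * (\<Sum>l. ?z^l * d l m)" by (rule suminf_mult[OF sk])
  finally show ?thesis using D by simp
qed

lemma XB_closed:
  fixes a :: "'a ^ 'n"
  assumes aniso: "\<forall>x. diagQ a x = 0 \<longrightarrow> x = 0"
    and ord_a: "\<forall>i. 0 \<le> v (a $ i) \<and> v (a $ i) \<le> 1"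
    and b: "0 < Re \<beta>"
  shows "XB v \<pi> q M a \<beta> (rho m) = XB v \<pi> q M a \<beta> 0
     + ((zz \<beta>)^2 / of_nat q ^ CARD('n))^m * (XB v \<pi> q M a \<beta> 4 - XB v \<pi> q M a \<beta> 0)"
proof (induction m)
  case 0 then show ?case by (simp add: rho_def)
next
  case (Suc m)
  define w where "w = (zz \<beta>)^2 / of_nat q ^ CARD('n)"
  have "XB v \<pi> q M a \<beta> (rho (Suc m)) = XB v \<pi> q M a \<beta> 0 + w * (XB v \<pi> q M a \<beta> (rho m) - XB v \<pi> q M a \<beta> 0)"
    using XB_rec[OF aniso ord_a b, of m] unfolding w_def[symmetric] by (simp add: algebra_simps)
  also have "\<dots> = XB v \<pi> q M a \<beta> 0 + w ^ Suc m * (XB v \<pi> q M a \<beta> 4 - XB v \<pi> q M a \<beta> 0)"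
    using Suc unfolding w_def[symmetric] by simp
  finally show ?case unfolding w_def .
qed

end


context vf begin

definition shell :: "nat \<Rightarrow> 'a set" where "shell T = {t. t \<noteq> 0 \<and> v t = int T}"

lemma U0_eq: "unit_filtr v \<pi> 0 = shell 0" unfolding unit_filtr_def shell_def by simp

lemma shell_img: "shell T = (\<lambda>u. \<pi>^T * u) ` unit_filtr v \<pi> 0"
proof (intro set_eqI iffI)
  fix t assume t: "t \<in> shell T"
  have "t = \<pi>^T * (t / \<pi>^T)" using pi_nz by simp
  moreover have "t / \<pi>^T \<in> unit_filtr v \<pi> 0" using t pi_nz by (simp add: shell_def unit_filtr_def vdiv vpipow)
  ultimately show "t \<in> (\<lambda>u. \<pi>^T * u) ` unit_filtr v \<pi> 0" by blast
next
  fix t assume "t \<in> (\<lambda>u. \<pi>^T * u) ` unit_filtr v \<pi> 0"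
  then obtain u where "u \<noteq> 0" "v u = 0" "t = \<pi>^T * u" by (auto simp: unit_filtr_def)
  then show "t \<in> shell T" using pi_nz by (simp add: shell_def vmult vpipow)
qed

lemma shell_disj: "S \<noteq> T \<Longrightarrow> shell S \<inter> shell T = {}" by (auto simp: shell_def)

lemma valring_shell: "t \<in> valring v - {0} \<longleftrightarrow> t \<in> shell (nat (v t))"
  by (auto simp: shell_def valring_def)

lemma shell_valring: "t \<in> shell T \<Longrightarrow> t \<in> valring v - {0}"
  by (auto simp: shell_def valring_def)

end

locale vfMN = vfM v \<pi> q M for v :: "'a::field \<Rightarrow> int" and \<pi> q and M :: "('a ^ 'n) measure" +
  fixes N :: "'a measure"
  assumes haarN: "is_mult_haar v \<pi> N"
begin

lemma HN: "space N = {x. x \<noteq> 0} \<and> sets N = sigma_sets {x. x \<noteq> 0} (mult_cosets v \<pi>) \<and>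
     (\<forall>A\<in>sets N. \<forall>c. c \<noteq> 0 \<longrightarrow> emeasure N ((\<lambda>u. c * u) ` A) = emeasure N A) \<and>
     emeasure N (unit_filtr v \<pi> 0) = 1"
  using haarN unfolding is_mult_haar_def .

lemma setsN: "sets N = sigma_sets {x. x \<noteq> 0} (mult_cosets v \<pi>)" using HN by simp
lemma invN: "A \<in> sets N \<Longrightarrow> c \<noteq> 0 \<Longrightarrow> emeasure N ((\<lambda>u. c * u) ` A) = emeasure N A"
  using HN[THEN conjunct2, THEN conjunct2, THEN conjunct1] by blast
lemma N1: "emeasure N (unit_filtr v \<pi> 0) = 1" using HN by simp

lemma shell_sets: "shell T \<in> sets N"
proof -
  have "(\<lambda>u. \<pi>^T * u) ` unit_filtr v \<pi> 0 \<in> mult_cosets v \<pi>"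
    unfolding mult_cosets_def using pi_nz by (intro CollectI exI[of _ "\<pi>^T"] exI[of _ "0::nat"] conjI refl) simp
  then show ?thesis unfolding setsN shell_img by (rule sigma_sets.Basic)
qed

lemma U0_sets: "unit_filtr v \<pi> 0 \<in> sets N"
  using shell_sets[of 0] U0_eq by simp

lemma shell_measure: "emeasure N (shell T) = 1"
  unfolding shell_img using invN[OF U0_sets, of "\<pi>^T"] pi_nz N1 by simp

lemma shell_measure': "measure N (shell T) = 1"
  using shell_measure by (simp add: measure_def)

end


context vfMN begin

definition ee :: nat where "ee = nat (v 2)"
lemma ee_int: "int ee = v 2" using v2 by (simp add: ee_def)

abbreviation az :: "complex \<Rightarrow> complex" where "az \<alpha> \<equiv> of_nat q powr (- \<alpha>)"

definition XBv :: "'a ^ 'n \<Rightarrow> complex \<Rightarrow> nat \<Rightarrow> complex" where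
  "XBv a \<beta> T = (if T < ee then XB v \<pi> q M a \<beta> (\<pi>^(2*T)) else XB v \<pi> q M a \<beta> (rho (T - ee)))"

definition cval :: "'a ^ 'n \<Rightarrow> complex \<Rightarrow> complex \<Rightarrow> nat \<Rightarrow> complex" where
  "cval a \<alpha> \<beta> T = az \<alpha> ^ T * XBv a \<beta> T"

lemma absv_powr: assumes t: "t \<noteq> 0" "v t = int T"
  shows "complex_of_real (absv v q t) powr \<alpha> = az \<alpha> ^ T"
proof -
  have q: "0 < real q" using q_ge2 by simp
  have "absv v q t = real q powr (- real T)" using t by (simp add: absv_def)
  then have "complex_of_real (absv v q t) powr \<alpha> = exp (\<alpha> * of_real (- real T * ln (real q)))"
    using q by (simp add: cpow_real ln_powr)
  also have "\<dots> = exp (of_nat T * (- \<alpha> * of_real (ln (real q))))" by (simp add: algebra_simps)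
  also have "\<dots> = exp (- \<alpha> * of_real (ln (real q))) ^ T" by (rule exp_of_nat_mult)
  also have "\<dots> = az \<alpha> ^ T" using q by (simp add: cpow_nat)
  finally show ?thesis .
qed

lemma XB_unit:
  assumes u: "v u = 0" "u \<noteq> 0"
  shows "XB v \<pi> q M (a::'a^'n) \<beta> (u^2 * \<rho>) = XB v \<pi> q M a \<beta> \<rho>"
  unfolding XB_def using XBl_unit[OF u] by simp

lemma XB_shell:
  assumes t: "t \<in> shell T"
  shows "XB v \<pi> q M (a::'a^'n) \<beta> (t^2) = XBv a \<beta> T"
proof -
  have tnz: "t \<noteq> 0" and vt: "v t = int T" using t by (auto simp: shell_def)
  define w where "w = t / \<pi>^T"
  have wnz: "w \<noteq> 0" and vw: "v w = 0" using tnz vt pi_nz by (simp_all add: w_def vdiv vpipow)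
  have t2: "t^2 = w^2 * \<pi>^(2*T)" using pi_nz by (simp add: w_def power_mult_distrib power_mult field_simps)
  show ?thesis
  proof (cases "T < ee")
    case True
    then show ?thesis unfolding XBv_def t2 using XB_unit[OF vw wnz] by simp
  next
    case False
    define u0 where "u0 = \<pi>^ee / 2"
    have u0nz: "u0 \<noteq> 0" using pi_nz two_nz by (simp add: u0_def)
    have vu0: "v u0 = 0" using pi_nz two_nz by (simp add: u0_def vdiv vpipow ee_int)
    have "\<pi>^(2*T) = u0^2 * rho (T - ee)"
    proof -
      have "2 * T = 2 * ee + 2 * (T - ee)" using False by simp
      then have "\<pi>^(2*T) = (\<pi>^ee)^2 * \<pi>^(2*(T - ee))" by (simp add: power_add power_mult[symmetric] mult.commute)
      then show ?thesis using two_nz four_nz by (simp add: u0_def rho_def power_divide field_simps)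
    qed
    then have "t^2 = (w * u0)^2 * rho (T - ee)" using t2 by (simp add: power_mult_distrib)
    moreover have "v (w * u0) = 0" "w * u0 \<noteq> 0" using vw vu0 wnz u0nz by (simp_all add: vmult)
    ultimately show ?thesis unfolding XBv_def using False XB_unit by simp
  qed
qed

lemma integrand_shell:
  assumes t: "t \<in> shell T"
  shows "PiB_integrand v \<pi> q M (a::'a^'n) \<alpha> \<beta> t = cval a \<alpha> \<beta> T"
proof -
  have "t \<noteq> 0" "v t = int T" using t by (auto simp: shell_def)
  then show ?thesis unfolding PiB_integrand_def cval_def using absv_powr XB_shell[OF t] by simp
qed

lemma norm_az: "0 < Re \<alpha> \<Longrightarrow> norm (az \<alpha>) < 1"
  using q_ge2 by (intro norm_cpow_nat) auto

lemma cval_bound: "0 < Re \<beta> \<Longrightarrow> norm (cval (a::'a^'n) \<alpha> \<beta> T) \<le> norm (az \<alpha>) ^ T * (1 / (1 - norm (zz \<beta>)))"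
proof -
  assume b: "0 < Re \<beta>"
  have "norm (XBv a \<beta> T) \<le> 1 / (1 - norm (zz \<beta>))" unfolding XBv_def using XB_norm_bound[OF b] by simp
  then show ?thesis unfolding cval_def norm_mult norm_power by (rule mult_left_mono) simp
qed

lemma cval_summable: "0 < Re \<alpha> \<Longrightarrow> 0 < Re \<beta> \<Longrightarrow> summable (\<lambda>T. norm (cval (a::'a^'n) \<alpha> \<beta> T))"
proof -
  assume a: "0 < Re \<alpha>" and b: "0 < Re \<beta>"
  have "summable (\<lambda>T. norm (az \<alpha>) ^ T * (1 / (1 - norm (zz \<beta>))))"
    using norm_az[OF a] by (intro summable_mult2 summable_geometric) simp
  then show ?thesis by (rule summable_comparison_test') (use cval_bound[OF b] in simp)
qed

lemma PiB_sums:
  fixes a :: "'a ^ 'n"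
  assumes a: "0 < Re \<alpha>" and b: "0 < Re \<beta>"
  shows "set_integrable N (valring v - {0}) (PiB_integrand v \<pi> q M a \<alpha> \<beta>)"
    and "(\<lambda>T. cval a \<alpha> \<beta> T) sums PiB v \<pi> q M N a \<alpha> \<beta>"
proof -
  define g where "g T x = indicator (shell T) x *\<^sub>R cval a \<alpha> \<beta> T" for T x
  have fin: "emeasure N (shell T) < \<infinity>" for T using shell_measure by simp
  have int: "integrable N (g T)" for T unfolding g_def using shell_sets fin by (rule integrable_indicator)
  have intg: "integral\<^sup>L N (g T) = cval a \<alpha> \<beta> T" for T
    unfolding g_def using shell_sets fin shell_measure' by simp
  have ng: "norm (g T x) \<le> norm (cval a \<alpha> \<beta> T)" for T x
    unfolding g_def by (simp add: indicator_def)
  have intn: "(\<integral>x. norm (g T x) \<partial>N) = norm (cval a \<alpha> \<beta> T)" for T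
  proof -
    have "(\<lambda>x. norm (g T x)) = (\<lambda>x. indicator (shell T) x *\<^sub>R norm (cval a \<alpha> \<beta> T))"
      unfolding g_def by (auto simp: indicator_def)
    then show ?thesis using shell_sets fin shell_measure' by simp
  qed
  have sn: "summable (\<lambda>T. norm (cval a \<alpha> \<beta> T))" by (rule cval_summable[OF a b])
  have ae: "AE x in N. summable (\<lambda>T. norm (g T x))"
    by (intro AE_I2 summable_comparison_test'[OF sn]) (use ng in simp)
  have sint: "summable (\<lambda>T. (\<integral>x. norm (g T x) \<partial>N))" unfolding intn by (rule sn)
  have pw: "indicator (valring v - {0}) x *\<^sub>R PiB_integrand v \<pi> q M a \<alpha> \<beta> x = (\<Sum>T. g T x)" for x
  proof (cases "x \<in> valring v - {0}")
    case True
    let ?T = "nat (v x)"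
    have xs: "x \<in> shell ?T" using True valring_shell by blast
    have "g T x = (if T = ?T then cval a \<alpha> \<beta> T else 0)" for T
      using xs shell_disj[of T ?T] unfolding g_def by (auto simp: indicator_def)
    then have "(\<lambda>T. g T x) sums cval a \<alpha> \<beta> ?T" using sums_single[of ?T "cval a \<alpha> \<beta>"] by simp
    then show ?thesis using True integrand_shell[OF xs] by (simp add: sums_iff)
  next
    case False
    have "g T x = 0" for T using False shell_valring unfolding g_def by (auto simp: indicator_def)
    then show ?thesis using False by simp
  qed
  have eqf: "(\<lambda>x. indicator (valring v - {0}) x *\<^sub>R PiB_integrand v \<pi> q M a \<alpha> \<beta> x) = (\<lambda>x. \<Sum>T. g T x)"
    using pw by (rule ext)
  show "set_integrable N (valring v - {0}) (PiB_integrand v \<pi> q M a \<alpha> \<beta>)"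
    unfolding set_integrable_def eqf by (rule integrable_suminf[OF int ae sint])
  show "(\<lambda>T. cval a \<alpha> \<beta> T) sums PiB v \<pi> q M N a \<alpha> \<beta>"
    unfolding PiB_def set_lebesgue_integral_def eqf using sums_integral[OF int ae sint] intg by simp
qed

end


lemma u_eq: "0 < q \<Longrightarrow> (of_nat q :: complex) powr (- 2 * \<beta> - of_nat n) = (of_nat q powr (- \<beta>))^2 / of_nat q ^ n"
proof -
  assume q: "0 < q"
  define L where "L = complex_of_real (ln (real q))"
  have eL: "exp L = of_nat q" using q by (simp add: L_def exp_of_real)
  have "(of_nat q :: complex) powr (- 2 * \<beta> - of_nat n) = exp ((- 2 * \<beta> - of_nat n) * L)"
    using q by (simp add: cpow_nat L_def)
  also have "\<dots> = exp (- \<beta> * L) ^ 2 / exp (of_nat n * L)"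
    by (simp add: exp_diff[symmetric] exp_of_nat_mult[symmetric] algebra_simps)
  also have "\<dots> = (of_nat q powr (- \<beta>))^2 / of_nat q ^ n"
    using q by (simp add: cpow_nat L_def exp_of_nat_mult eL[unfolded L_def])
  finally show ?thesis .
qed

context vfMN begin

lemma main:
  fixes a :: "'a ^ 'n"
  assumes aniso: "\<forall>x. diagQ a x = 0 \<longrightarrow> x = 0"
    and ord_a: "\<forall>i. 0 \<le> v (a $ i) \<and> v (a $ i) \<le> 1"
    and a: "0 < Re \<alpha>" and b: "0 < Re \<beta>"
  shows "PiB v \<pi> q M N a \<alpha> \<beta> =
      (\<Sum>T<nat (v 2). (of_nat q powr (- \<alpha>)) ^ T * XB v \<pi> q M a \<beta> (\<pi> ^ (2 * T)))
      + complex_of_real (absv v q 2) powr \<alpha>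
          / (1 - of_nat q powr (- \<alpha>) * of_nat q powr (- 2 * \<beta> - of_nat CARD('n)))
          * XB v \<pi> q M a \<beta> 4
      + complex_of_real (absv v q 2) powr \<alpha>
          * (of_nat q powr (- \<alpha>) - of_nat q powr (- \<alpha>) * of_nat q powr (- 2 * \<beta> - of_nat CARD('n)))
          / ((1 - of_nat q powr (- \<alpha>)) * (1 - of_nat q powr (- \<alpha>) * of_nat q powr (- 2 * \<beta> - of_nat CARD('n))))
          * XB v \<pi> q M a \<beta> 0"
proof -
  have q0: "0 < q" using q_ge2 by simp
  define A where "A = az \<alpha>"
  define W where "W = (zz \<beta>)^2 / of_nat q ^ CARD('n)"
  define E where "E = A ^ ee"
  define X0 where "X0 = XB v \<pi> q M a \<beta> 0"
  define X4 where "X4 = XB v \<pi> q M a \<beta> 4"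
  have uW: "(of_nat q :: complex) powr (- 2 * \<beta> - of_nat CARD('n)) = W"
    unfolding W_def by (rule u_eq[OF q0])
  have two: "complex_of_real (absv v q 2) powr \<alpha> = E"
    unfolding E_def A_def using absv_powr[of 2 ee \<alpha>] two_nz ee_int by simp
  have nA: "norm A < 1" unfolding A_def by (rule norm_az[OF a])
  have nW: "norm W \<le> 1"
  proof -
    have "norm W = norm (zz \<beta>) ^ 2 / real q ^ CARD('n)" unfolding W_def by (simp add: norm_divide norm_power)
    also have "\<dots> \<le> norm (zz \<beta>) ^ 2" using q0 by (simp add: divide_le_eq)
    also have "\<dots> \<le> 1" using norm_zz[OF b] by (simp add: power_le_one)
    finally show ?thesis .
  qed
  have nAW: "norm (A * W) < 1"
  proof -
    have "norm (A * W) \<le> norm A" using nW by (simp add: norm_mult mult_left_le)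
    then show ?thesis using nA by simp
  qed
  have A1: "1 - A \<noteq> 0" using nA by auto
  have AW1: "1 - A * W \<noteq> 0" using nAW by auto
  have S: "(\<lambda>T. cval a \<alpha> \<beta> T) sums PiB v \<pi> q M N a \<alpha> \<beta>" by (rule PiB_sums(2)[OF a b])
  have S2: "(\<lambda>m. cval a \<alpha> \<beta> (m + ee)) sums (PiB v \<pi> q M N a \<alpha> \<beta> - (\<Sum>T<ee. cval a \<alpha> \<beta> T))"
    by (rule sums_split_initial_segment[OF S])
  have cv: "cval a \<alpha> \<beta> (m + ee) = E * (X0 * A^m + (X4 - X0) * (A * W)^m)" for m
  proof -
    have h: "XB v \<pi> q M a \<beta> (rho m) = X0 + W^m * (X4 - X0)"
      using XB_closed[OF aniso ord_a b, of m] unfolding X0_def X4_def W_def by simp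
    have "cval a \<alpha> \<beta> (m + ee) = A^(m + ee) * XB v \<pi> q M a \<beta> (rho m)"
      unfolding cval_def XBv_def A_def by simp
    also have "\<dots> = E * (X0 * A^m + (X4 - X0) * (A * W)^m)"
      unfolding h E_def by (simp add: power_add power_mult_distrib algebra_simps)
    finally show ?thesis .
  qed
  have G: "(\<lambda>m. E * (X0 * A^m + (X4 - X0) * (A * W)^m)) sums (E * (X0 * (1 / (1 - A)) + (X4 - X0) * (1 / (1 - A * W))))"
    by (intro sums_mult sums_add geometric_sums nA nAW)
  have eq1: "PiB v \<pi> q M N a \<alpha> \<beta> - (\<Sum>T<ee. cval a \<alpha> \<beta> T) = E * (X0 * (1 / (1 - A)) + (X4 - X0) * (1 / (1 - A * W)))"
    using S2 G unfolding cv by (simp add: sums_iff)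
  have low: "(\<Sum>T<ee. cval a \<alpha> \<beta> T) = (\<Sum>T<nat (v 2). A ^ T * XB v \<pi> q M a \<beta> (\<pi> ^ (2 * T)))"
    unfolding cval_def XBv_def ee_def A_def by (intro sum.cong) auto
  have fin: "E * (X0 * (1 / (1 - A)) + (X4 - X0) * (1 / (1 - A * W)))
     = E / (1 - A * W) * X4 + E * (A - A * W) / ((1 - A) * (1 - A * W)) * X0"
  proof -
    have e1: "1 / (1 - A) - 1 / (1 - A * W) = (A - A * W) / ((1 - A) * (1 - A * W))"
      using A1 AW1 by (simp add: divide_simps)
    have "E * (X0 * (1 / (1 - A)) + (X4 - X0) * (1 / (1 - A * W)))
       = E / (1 - A * W) * X4 + E * X0 * (1 / (1 - A) - 1 / (1 - A * W))"
      by (simp add: algebra_simps add_divide_distrib[symmetric])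
    also have "\<dots> = E / (1 - A * W) * X4 + E * (A - A * W) / ((1 - A) * (1 - A * W)) * X0"
      unfolding e1 by (simp add: algebra_simps)
    finally show ?thesis .
  qed
  have fin2: "PiB v \<pi> q M N a \<alpha> \<beta> = (\<Sum>T<nat (v 2). A ^ T * XB v \<pi> q M a \<beta> (\<pi> ^ (2 * T)))
     + E / (1 - A * W) * X4 + E * (A - A * W) / ((1 - A) * (1 - A * W)) * X0"
    using eq1 low fin by (simp add: algebra_simps)
  show ?thesis
    unfolding uW two A_def[symmetric] X0_def[symmetric] X4_def[symmetric] by (rule fin2)
qed

end


theorem proposition2p3:
  fixes v :: "'a::field \<Rightarrow> int" and \<pi> :: 'a and q :: nat
    and a :: "'a ^ 'n" and M :: "('a ^ 'n) measure" and N :: "'a measure"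
  assumes field: "nonarch_local_field_res2 v \<pi> q"
    and aniso: "\<forall>x. diagQ a x = 0 \<longrightarrow> x = 0"
    and ord_a: "\<forall>i. 0 \<le> v (a $ i) \<and> v (a $ i) \<le> 1"
    and haarM: "is_additive_haar_prob v \<pi> M"
    and haarN: "is_mult_haar v \<pi> N"
  shows "\<exists>R::real. \<forall>\<alpha> \<beta> :: complex. R < Re \<alpha> \<and> R < Re \<beta> \<longrightarrow>
    (\<forall>\<rho>\<in>valring v. summable (\<lambda>l. (of_nat q powr (- \<beta>)) ^ l * complex_of_real (XBl v \<pi> M a l \<rho>))) \<and>
    set_integrable N (valring v - {0}) (PiB_integrand v \<pi> q M a \<alpha> \<beta>) \<and>
    PiB v \<pi> q M N a \<alpha> \<beta> =
      (\<Sum>T<nat (v 2). (of_nat q powr (- \<alpha>)) ^ T * XB v \<pi> q M a \<beta> (\<pi> ^ (2 * T)))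
      + complex_of_real (absv v q 2) powr \<alpha>
          / (1 - of_nat q powr (- \<alpha>) * of_nat q powr (- 2 * \<beta> - of_nat CARD('n)))
          * XB v \<pi> q M a \<beta> 4
      + complex_of_real (absv v q 2) powr \<alpha>
          * (of_nat q powr (- \<alpha>) - of_nat q powr (- \<alpha>) * of_nat q powr (- 2 * \<beta> - of_nat CARD('n)))
          / ((1 - of_nat q powr (- \<alpha>)) * (1 - of_nat q powr (- \<alpha>) * of_nat q powr (- 2 * \<beta> - of_nat CARD('n))))
          * XB v \<pi> q M a \<beta> 0"
proof -
  interpret L: vfMN v \<pi> q M N
  proof unfold_locales
    show "nonarch_local_field_res2 v \<pi> q" by (rule field)
    show "is_additive_haar_prob v \<pi> M" by (rule haarM)
    show "is_mult_haar v \<pi> N" by (rule haarN)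
  qed
  show ?thesis
  proof (rule exI[of _ 0], intro allI impI)
    fix \<alpha> \<beta> :: complex assume h: "0 < Re \<alpha> \<and> 0 < Re \<beta>"
    then have a: "0 < Re \<alpha>" and b: "0 < Re \<beta>" by auto
    show "(\<forall>\<rho>\<in>valring v. summable (\<lambda>l. (of_nat q powr (- \<beta>)) ^ l * complex_of_real (XBl v \<pi> M a l \<rho>))) \<and>
    set_integrable N (valring v - {0}) (PiB_integrand v \<pi> q M a \<alpha> \<beta>) \<and>
    PiB v \<pi> q M N a \<alpha> \<beta> =
      (\<Sum>T<nat (v 2). (of_nat q powr (- \<alpha>)) ^ T * XB v \<pi> q M a \<beta> (\<pi> ^ (2 * T)))
      + complex_of_real (absv v q 2) powr \<alpha>
          / (1 - of_nat q powr (- \<alpha>) * of_nat q powr (- 2 * \<beta> - of_nat CARD('n)))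
          * XB v \<pi> q M a \<beta> 4
      + complex_of_real (absv v q 2) powr \<alpha>
          * (of_nat q powr (- \<alpha>) - of_nat q powr (- \<alpha>) * of_nat q powr (- 2 * \<beta> - of_nat CARD('n)))
          / ((1 - of_nat q powr (- \<alpha>)) * (1 - of_nat q powr (- \<alpha>) * of_nat q powr (- 2 * \<beta> - of_nat CARD('n))))
          * XB v \<pi> q M a \<beta> 0"
    proof (intro conjI ballI)
      fix \<rho> :: 'a
      show "summable (\<lambda>l. (of_nat q powr (- \<beta>)) ^ l * complex_of_real (XBl v \<pi> M a l \<rho>))"
        by (rule L.XB_summable[OF b])
    next
      show "set_integrable N (valring v - {0}) (PiB_integrand v \<pi> q M a \<alpha> \<beta>)"
        by (rule L.PiB_sums(1)[OF a b])
    next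
      show "PiB v \<pi> q M N a \<alpha> \<beta> =
      (\<Sum>T<nat (v 2). (of_nat q powr (- \<alpha>)) ^ T * XB v \<pi> q M a \<beta> (\<pi> ^ (2 * T)))
      + complex_of_real (absv v q 2) powr \<alpha>
          / (1 - of_nat q powr (- \<alpha>) * of_nat q powr (- 2 * \<beta> - of_nat CARD('n)))
          * XB v \<pi> q M a \<beta> 4
      + complex_of_real (absv v q 2) powr \<alpha>
          * (of_nat q powr (- \<alpha>) - of_nat q powr (- \<alpha>) * of_nat q powr (- 2 * \<beta> - of_nat CARD('n)))
          / ((1 - of_nat q powr (- \<alpha>)) * (1 - of_nat q powr (- \<alpha>) * of_nat q powr (- 2 * \<beta> - of_nat CARD('n))))
          * XB v \<pi> q M a \<beta> 0"
        by (rule L.main[OF aniso ord_a a b])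
    qed
  qed
qed


end
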